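(* Let $a,w,x,y$ be real sequences satisfying the ARMA relation $a*y=w*x$, and let $\mathcal{L}$ be a differentiable scalar function of $y$ with gradient $\nabla y=\partial\mathcal{L}/\partial y$. Regard $y$ as a function of $(a,w,x)$ determined by this relation, and let $\nabla x,\nabla w,\nabla a$ be the gradients of $\mathcal{L}(y(a,w,x))$ with respect to $x,w,a$. Then $$\bar a*\nabla x=\bar w*\nabla y,\qquad -\,\bar a*\nabla a=\bar y*\nabla y,\qquad \bar a*\nabla w=\bar x*\nabla y,$$ where $\bar a,\bar w,\bar y,\bar x$ denote the reversed sequences ($\bar a_i=a_{-i}$, etc.).
   Context: Convolution is $(u*v)_i=\sum_p u_p v_{i-p}$. The sequences are either (i) indexed by $\mathbb{Z}$, with $a$ having a convolution inverse $a^{-1}$ (i.e. $a*a^{-1}=a^{-1}*a=\delta$, where $\delta_0=1$ and $\delta_i=0$ for $i\neq0$) and all series involved absolutely convergent, the gradients being given by the chain rule, e.g. $\nabla w_r=\sum_i(\partial y_i/\partial w_r)\nabla y_i$; or (ii) periodic with period $N$ and convolution circular, with the discrete Fourier transform of $a$ nonzero at every frequency. *)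

theory Defs
  imports "HOL-Analysis.Analysis"
begin

definition zconv :: "(int \<Rightarrow> real) \<Rightarrow> (int \<Rightarrow> real) \<Rightarrow> int \<Rightarrow> real" where
  "zconv u v i = infsum (\<lambda>p. u p * v (i - p)) UNIV"

definition zdelta :: "int \<Rightarrow> real" where
  "zdelta i = (if i = 0 then 1 else 0)"

definition rev_seq :: "(int \<Rightarrow> real) \<Rightarrow> int \<Rightarrow> real" where
  "rev_seq u i = u (- i)"

definition zarma_sol :: "(int \<Rightarrow> real) \<Rightarrow> (int \<Rightarrow> real) \<Rightarrow> (int \<Rightarrow> real) \<Rightarrow> int \<Rightarrow> real" where
  "zarma_sol a w x = (THE y. y summable_on UNIV \<and> zconv a y = zconv w x)"

definition zpartial :: "((int \<Rightarrow> real) \<Rightarrow> int \<Rightarrow> real) \<Rightarrow> (int \<Rightarrow> real) \<Rightarrow> int \<Rightarrow> int \<Rightarrow> real" where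
  "zpartial F u r i = deriv (\<lambda>t. F (\<lambda>j. u j + t * zdelta (j - r)) i) 0"

definition zchain_grad :: "((int \<Rightarrow> real) \<Rightarrow> int \<Rightarrow> real) \<Rightarrow> (int \<Rightarrow> real) \<Rightarrow> (int \<Rightarrow> real) \<Rightarrow> int \<Rightarrow> real" where
  "zchain_grad F u gy r = infsum (\<lambda>i. zpartial F u r i * gy i) UNIV"

section \<open>Case (ii): N-periodic sequences, indexed by a finite cyclic ring Z/N\<close>

definition cconv :: "real^('n::{finite,comm_ring_1}) \<Rightarrow> real^('n::{finite,comm_ring_1}) \<Rightarrow> real^('n::{finite,comm_ring_1})" where
  "cconv u v = (\<chi> i. \<Sum>p\<in>UNIV. u $ p * v $ (i - p))"

definition crev :: "real^('n::{finite,comm_ring_1}) \<Rightarrow> real^('n::{finite,comm_ring_1})" where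
  "crev u = (\<chi> i. u $ (- i))"

definition cdft :: "real^('n::{finite,comm_ring_1}) \<Rightarrow> nat \<Rightarrow> complex" where
  "cdft a k = (\<Sum>j<CARD('n). complex_of_real (a $ of_nat j)
                 * cis (- 2 * pi * real j * real k / real CARD('n)))"

definition carma_sol :: "real^('n::{finite,comm_ring_1}) \<Rightarrow> real^('n::{finite,comm_ring_1}) \<Rightarrow> real^('n::{finite,comm_ring_1}) \<Rightarrow> real^('n::{finite,comm_ring_1})" where
  "carma_sol a w x = (THE y. cconv a y = cconv w x)"

end

theory Submission
  imports Defs
begin

definition n1 :: "('a \<Rightarrow> real) \<Rightarrow> real" where
  "n1 u = infsum (\<lambda>p. \<bar>u p\<bar>) UNIV"

definition shift :: "int \<Rightarrow> (int \<Rightarrow> real) \<Rightarrow> int \<Rightarrow> real" where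
  "shift r u = (\<lambda>i. u (i - r))"

lemma abs_summ: "(u::'a \<Rightarrow> real) summable_on A \<Longrightarrow> (\<lambda>p. \<bar>u p\<bar>) summable_on A"
  using summable_on_iff_abs_summable_on_real[of u A] by (simp add: real_norm_def)

lemma abs_summ_iff: "(u::'a \<Rightarrow> real) summable_on A \<longleftrightarrow> (\<lambda>p. \<bar>u p\<bar>) summable_on A"
  using summable_on_iff_abs_summable_on_real[of u A] by (simp add: real_norm_def)

lemma n1_nonneg: "n1 u \<ge> 0"
  unfolding n1_def by (rule infsum_nonneg) auto

lemma abs_le_n1: assumes "u summable_on UNIV" shows "\<bar>u i\<bar> \<le> n1 u"
proof -
  have "infsum (\<lambda>p. \<bar>u p\<bar>) {i} \<le> infsum (\<lambda>p. \<bar>u p\<bar>) UNIV"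
    by (rule infsum_mono_neutral) (auto simp: abs_summ assms)
  then show ?thesis by (simp add: n1_def)
qed

lemma summ_comparison:
  fixes f :: "'a \<Rightarrow> real"
  assumes "g summable_on A" "\<And>x. x \<in> A \<Longrightarrow> \<bar>f x\<bar> \<le> \<bar>g x\<bar>"
  shows "f summable_on A"
proof -
  have "(\<lambda>x. norm (f x)) summable_on A"
    by (rule summable_on_comparison_test[of "\<lambda>x. \<bar>g x\<bar>"]) (use assms abs_summ in auto)
  then show ?thesis using abs_summ_iff[of f A] by (simp add: real_norm_def)
qed

lemma summ_prod:
  fixes u :: "'a \<Rightarrow> real" and v :: "'b \<Rightarrow> real"
  assumes "u summable_on UNIV" "v summable_on UNIV"
  shows "(\<lambda>(p,q). u p * v q) summable_on UNIV"
proof -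
  have "(\<lambda>x. norm ((\<lambda>(p,q). u p * v q) x)) summable_on Sigma UNIV (\<lambda>_. UNIV)"
  proof (rule iffD2[OF Infinite_Sum.abs_summable_on_Sigma_iff], intro conjI ballI)
    fix p
    show "(\<lambda>x. norm ((\<lambda>q. case (p, q) of (p, q) \<Rightarrow> u p * v q) x)) summable_on UNIV"
      using abs_summ[OF summable_on_cmult_right[OF assms(2), of "u p"]]
      by (simp add: real_norm_def)
  next
    have "(\<lambda>p. \<bar>u p\<bar> * n1 v) summable_on UNIV"
      by (rule summable_on_cmult_left) (use abs_summ[OF assms(1)] in auto)
    moreover have "infsum (\<lambda>q. norm (case (p, q) of (p, q) \<Rightarrow> u p * v q)) UNIV = \<bar>u p\<bar> * n1 v" for p
      by (simp add: real_norm_def abs_mult infsum_cmult_right' n1_def)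
    ultimately show "(\<lambda>x. norm ((\<lambda>p. infsum (\<lambda>q. norm (case (p, q) of (p, q) \<Rightarrow> u p * v q)) UNIV) x)) summable_on UNIV"
      using abs_summ by (simp add: n1_nonneg)
  qed
  then show ?thesis
    by (simp add: abs_summ_iff[symmetric] real_norm_def)
qed

lemma summ_family:
  fixes u v :: "int \<Rightarrow> real"
  assumes "u summable_on UNIV" "v summable_on UNIV"
  shows "(\<lambda>(p,i). u p * v (i + f p)) summable_on UNIV"
proof -
  have "(\<lambda>(p,i). u p * v (i + f p)) summable_on UNIV \<longleftrightarrow> (\<lambda>(p,q). u p * v q) summable_on UNIV"
    by (rule summable_on_reindex_bij_witness[of _ "\<lambda>(p,q). (p, q - f p)" "\<lambda>(p,i). (p, i + f p)"]) auto
  then show ?thesis using summ_prod[OF assms] by simp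
qed


lemma infsum_single: "infsum (\<lambda>p. if p = a then (c::real) else 0) UNIV = c"
proof -
  have "infsum (\<lambda>p. if p = a then (c::real) else 0) UNIV = infsum (\<lambda>p. if p = a then (c::real) else 0) {a}"
    by (rule infsum_cong_neutral) auto
  then show ?thesis by simp
qed

lemma summable_single: "(\<lambda>p. if p = a then (c::real) else 0) summable_on UNIV"
proof -
  have "(\<lambda>p. if p = a then (c::real) else 0) summable_on UNIV \<longleftrightarrow> (\<lambda>p. if p = a then (c::real) else 0) summable_on {a}"
    by (rule summable_on_cong_neutral) auto
  then show ?thesis by simp
qed

lemma infsum_shift_int: "infsum (\<lambda>i. g (i - p)) (UNIV::int set) = infsum g UNIV"
  by (rule infsum_reindex_bij_witness[of _ "\<lambda>j. j + p" "\<lambda>i. i - p"]) auto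

lemma summable_shift_int: "(\<lambda>i. g (i - p)) summable_on (UNIV::int set) \<longleftrightarrow> g summable_on UNIV"
  by (rule summable_on_reindex_bij_witness[of _ "\<lambda>j. j + p" "\<lambda>i. i - p"]) auto

lemma infsum_neg_int: "infsum (\<lambda>i. g (- i)) (UNIV::int set) = infsum g UNIV"
  by (rule infsum_reindex_bij_witness[of _ "\<lambda>j. - j" "\<lambda>i. - i"]) auto

lemma summable_neg_int: "(\<lambda>i. g (- i)) summable_on (UNIV::int set) \<longleftrightarrow> g summable_on UNIV"
  by (rule summable_on_reindex_bij_witness[of _ "\<lambda>j. - j" "\<lambda>i. - i"]) auto

lemma summ_bounded_mult:
  fixes u g :: "'a \<Rightarrow> real"
  assumes "u summable_on UNIV" "\<And>i. \<bar>g i\<bar> \<le> M"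
  shows "(\<lambda>p. u p * g p) summable_on UNIV"
proof (rule summ_comparison[of "\<lambda>p. u p * M"])
  show "(\<lambda>p. u p * M) summable_on UNIV" by (rule summable_on_cmult_left[OF assms(1)])
  fix p
  have "M \<ge> 0" using assms(2)[of p] by linarith
  then show "\<bar>u p * g p\<bar> \<le> \<bar>u p * M\<bar>"
    using assms(2)[of p] by (simp add: abs_mult mult_left_mono)
qed

lemma conv_inner_summ:
  fixes u v :: "int \<Rightarrow> real"
  assumes "u summable_on UNIV" "v summable_on UNIV"
  shows "(\<lambda>p. u p * v (i - p)) summable_on UNIV"
  by (rule summ_bounded_mult[OF assms(1), of _ "n1 v"]) (rule abs_le_n1[OF assms(2)])

lemma conv_family:
  fixes u v :: "int \<Rightarrow> real"
  assumes "u summable_on UNIV" "v summable_on UNIV"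
  shows "(\<lambda>(i,p). u p * v (i - p)) summable_on UNIV"
proof -
  have "(\<lambda>(p,i). u p * v (i + (- p))) summable_on UNIV" by (rule summ_family[OF assms])
  then have "(\<lambda>(p,i). u p * v (i + (- p))) summable_on (UNIV \<times> UNIV)" by simp
  then have "(\<lambda>(i,p). u p * v (i + (- p))) summable_on (UNIV \<times> UNIV)"
    by (subst summable_on_swap) (simp add: case_prod_unfold)
  then show ?thesis by simp
qed

lemma zconv_summable:
  assumes "u summable_on UNIV" "v summable_on UNIV"
  shows "zconv u v summable_on UNIV"
proof -
  have "(\<lambda>(i,p). u p * v (i - p)) summable_on Sigma UNIV (\<lambda>_. UNIV)"
    using conv_family[OF assms] by simp
  then show ?thesis
    unfolding zconv_def[abs_def] by (rule summable_on_Sigma_banach)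
qed

lemma zconv_n1:
  assumes "u summable_on UNIV" "v summable_on UNIV"
  shows "n1 (zconv u v) \<le> n1 u * n1 v"
proof -
  have au: "(\<lambda>p. \<bar>u p\<bar>) summable_on UNIV" and av: "(\<lambda>p. \<bar>v p\<bar>) summable_on UNIV"
    using assms abs_summ by auto
  have fam: "(\<lambda>(i,p). \<bar>u p\<bar> * \<bar>v (i - p)\<bar>) summable_on UNIV"
    using conv_family[OF au av] by simp
  then have fam': "(\<lambda>(i,p). \<bar>u p\<bar> * \<bar>v (i - p)\<bar>) summable_on UNIV \<times> UNIV" by simp
  have "(\<lambda>i. infsum (\<lambda>p. \<bar>u p\<bar> * \<bar>v (i - p)\<bar>) UNIV) summable_on UNIV"
    using summable_on_Sigma_banach[of "\<lambda>i p. \<bar>u p\<bar> * \<bar>v (i - p)\<bar>" UNIV "\<lambda>_. UNIV"] fam by simp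
  moreover have "\<bar>zconv u v i\<bar> \<le> infsum (\<lambda>p. \<bar>u p\<bar> * \<bar>v (i - p)\<bar>) UNIV" for i
  proof -
    have "norm (zconv u v i) \<le> infsum (\<lambda>p. norm (u p * v (i - p))) UNIV"
      unfolding zconv_def
      by (rule norm_infsum_bound) (use abs_summ[OF conv_inner_summ[OF assms]] in \<open>simp add: real_norm_def\<close>)
    then show ?thesis by (simp add: abs_mult)
  qed
  ultimately have "n1 (zconv u v) \<le> infsum (\<lambda>i. infsum (\<lambda>p. \<bar>u p\<bar> * \<bar>v (i - p)\<bar>) UNIV) UNIV"
    unfolding n1_def by (intro infsum_mono abs_summ zconv_summable assms) auto
  also have "\<dots> = infsum (\<lambda>p. infsum (\<lambda>i. \<bar>u p\<bar> * \<bar>v (i - p)\<bar>) UNIV) UNIV"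
    by (rule infsum_swap_banach) (use fam' in auto)
  also have "\<dots> = infsum (\<lambda>p. \<bar>u p\<bar> * n1 v) UNIV"
    by (simp add: infsum_cmult_right' infsum_shift_int[of "\<lambda>j. \<bar>v j\<bar>"] n1_def)
  also have "\<dots> = n1 u * n1 v"
    by (simp add: infsum_cmult_left' n1_def)
  finally show ?thesis .
qed

lemma zconv_comm: "zconv u v = zconv v u"
proof
  fix i
  show "zconv u v i = zconv v u i"
    unfolding zconv_def
    by (rule infsum_reindex_bij_witness[of _ "\<lambda>q. i - q" "\<lambda>p. i - p"]) auto
qed

lemma zconv_delta_left: "zconv zdelta v = v"
proof
  fix i
  have "(\<lambda>p. zdelta p * v (i - p)) = (\<lambda>p. if p = 0 then v i else 0)"
    by (auto simp: zdelta_def)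
  then show "zconv zdelta v i = v i" by (simp add: zconv_def infsum_single)
qed

lemma zconv_delta_right: "zconv v zdelta = v"
  using zconv_delta_left zconv_comm by metis

lemma zdelta_summable: "zdelta summable_on UNIV"
proof -
  have "zdelta = (\<lambda>p. if p = 0 then 1 else 0)" by (auto simp: zdelta_def)
  then show ?thesis by (subst \<open>zdelta = _\<close>) (rule summable_single)
qed

lemma zconv_assoc:
  fixes u v w :: "int \<Rightarrow> real"
  assumes u: "u summable_on UNIV" and v: "v summable_on UNIV" and w: "w summable_on UNIV"
  shows "zconv u (zconv v w) = zconv (zconv u v) w"
proof
  fix i
  define F where "F = (\<lambda>(p,q). u p * (v q * w (i - p - q)))"
  have Fs: "F summable_on UNIV"
  proof (rule summ_comparison[of "\<lambda>(p,q). (u p * v q) * n1 w"])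
    show "(\<lambda>(p,q). (u p * v q) * n1 w) summable_on UNIV"
      using summable_on_cmult_left[OF summ_prod[OF u v], of "n1 w"]
      by (simp add: case_prod_unfold)
    fix x :: "int \<times> int"
    obtain p q where x: "x = (p,q)" by fastforce
    have "\<bar>w (i - p - q)\<bar> \<le> n1 w" by (rule abs_le_n1[OF w])
    then have "\<bar>u p\<bar> * \<bar>v q\<bar> * \<bar>w (i - p - q)\<bar> \<le> \<bar>u p\<bar> * \<bar>v q\<bar> * n1 w"
      by (intro mult_left_mono) auto
    then show "\<bar>F x\<bar> \<le> \<bar>case x of (p, q) \<Rightarrow> u p * v q * n1 w\<bar>"
      unfolding F_def x using n1_nonneg[of w]
      by (simp add: abs_mult mult.assoc)
  qed
  define G where "G = (\<lambda>(s,p). u p * v (s - p) * w (i - s))"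
  have GF: "G summable_on UNIV \<longleftrightarrow> F summable_on UNIV"
    by (rule summable_on_reindex_bij_witness[of _ "\<lambda>(p,q). (p + q, p)" "\<lambda>(s,p). (p, s - p)"])
       (auto simp: F_def G_def algebra_simps)
  have GF': "infsum G UNIV = infsum F UNIV"
    by (rule infsum_reindex_bij_witness[of _ "\<lambda>(p,q). (p + q, p)" "\<lambda>(s,p). (p, s - p)"])
       (auto simp: F_def G_def algebra_simps)
  have "zconv u (zconv v w) i = infsum (\<lambda>p. infsum (\<lambda>q. u p * (v q * w (i - p - q))) UNIV) UNIV"
    unfolding zconv_def by (simp add: infsum_cmult_right' algebra_simps)
  also have "\<dots> = infsum F UNIV"
    using infsum_Sigma'_banach[of "\<lambda>p q. u p * (v q * w (i - p - q))" UNIV "\<lambda>_. UNIV"] Fs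
    by (simp add: F_def)
  also have "\<dots> = infsum G UNIV" using GF' by simp
  also have "\<dots> = infsum (\<lambda>s. infsum (\<lambda>p. u p * v (s - p) * w (i - s)) UNIV) UNIV"
    using infsum_Sigma'_banach[of "\<lambda>s p. u p * v (s - p) * w (i - s)" UNIV "\<lambda>_. UNIV"] Fs GF
    by (simp add: G_def)
  also have "\<dots> = zconv (zconv u v) w i"
    unfolding zconv_def by (simp add: infsum_cmult_left')
  finally show "zconv u (zconv v w) i = zconv (zconv u v) w i" .
qed


lemma zconv_lin_right:
  assumes "u summable_on UNIV" "v1 summable_on UNIV" "v2 summable_on UNIV"
  shows "zconv u (\<lambda>j. v1 j + t * v2 j) = (\<lambda>i. zconv u v1 i + t * zconv u v2 i)"
proof
  fix i
  have "zconv u (\<lambda>j. v1 j + t * v2 j) i = infsum (\<lambda>p. u p * v1 (i - p) + t * (u p * v2 (i - p))) UNIV"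
    unfolding zconv_def by (simp add: algebra_simps)
  also have "\<dots> = infsum (\<lambda>p. u p * v1 (i - p)) UNIV + infsum (\<lambda>p. t * (u p * v2 (i - p))) UNIV"
    by (intro infsum_add summable_on_cmult_right conv_inner_summ assms)
  also have "\<dots> = zconv u v1 i + t * zconv u v2 i"
    unfolding zconv_def by (simp add: infsum_cmult_right')
  finally show "zconv u (\<lambda>j. v1 j + t * v2 j) i = zconv u v1 i + t * zconv u v2 i" .
qed

lemma zconv_lin_left:
  assumes "u summable_on UNIV" "v1 summable_on UNIV" "v2 summable_on UNIV"
  shows "zconv (\<lambda>j. v1 j + t * v2 j) u = (\<lambda>i. zconv v1 u i + t * zconv v2 u i)"
  using zconv_lin_right[OF assms, of t] zconv_comm by metis

lemma zconv_shift_right: "zconv u (shift r z) = shift r (zconv u z)"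
  unfolding zconv_def shift_def by (simp add: algebra_simps)

lemma zconv_shift_left: "zconv (shift r u) z = shift r (zconv u z)"
  using zconv_shift_right zconv_comm by metis

lemma shift_summable: "z summable_on UNIV \<Longrightarrow> shift r z summable_on UNIV"
  unfolding shift_def using summable_shift_int by blast

lemma n1_shift: "n1 (shift r z) = n1 z"
  unfolding shift_def n1_def using infsum_shift_int[of "\<lambda>j. \<bar>z j\<bar>"] by simp

lemma zconv_shift_delta: "zconv u (\<lambda>j. zdelta (j - r)) = shift r u"
proof -
  have "(\<lambda>j. zdelta (j - r)) = shift r zdelta" by (simp add: shift_def)
  then show ?thesis by (simp add: zconv_shift_right zconv_delta_right)
qed

lemma lin_summable:
  fixes v1 v2 :: "'a \<Rightarrow> real"
  shows "v1 summable_on UNIV \<Longrightarrow> v2 summable_on UNIV \<Longrightarrow> (\<lambda>j. v1 j + t * v2 j) summable_on UNIV"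
  by (intro summable_on_add summable_on_cmult_right)

lemma zconv_cancel:
  assumes "a summable_on UNIV" "b summable_on UNIV" "zconv b a = zdelta"
    "z1 summable_on UNIV" "z2 summable_on UNIV" "zconv a z1 = zconv a z2"
  shows "z1 = z2"
proof -
  have "z1 = zconv (zconv b a) z1" by (simp add: assms zconv_delta_left)
  also have "\<dots> = zconv b (zconv a z1)" using zconv_assoc[of b a z1] assms by metis
  also have "\<dots> = zconv b (zconv a z2)" by (simp add: assms)
  also have "\<dots> = zconv (zconv b a) z2" using zconv_assoc[of b a z2] assms by metis
  also have "\<dots> = z2" by (simp add: assms zconv_delta_left)
  finally show ?thesis .
qed

lemma zarma_sol_eq:
  assumes "a summable_on UNIV" "b summable_on UNIV" "zconv b a = zdelta"
    "z summable_on UNIV" "zconv a z = zconv w x"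
  shows "zarma_sol a w x = z"
  unfolding zarma_sol_def
proof (rule the_equality)
  show "z summable_on UNIV \<and> zconv a z = zconv w x" using assms by auto
  fix z' assume "z' summable_on UNIV \<and> zconv a z' = zconv w x"
  then show "z' = z" using zconv_cancel[OF assms(1-3), of z' z] assms by auto
qed

lemma grad_identity:
  fixes a b v gy :: "int \<Rightarrow> real"
  assumes a: "a summable_on UNIV" and b: "b summable_on UNIV" and v: "v summable_on UNIV"
    and ab: "zconv a b = zdelta" and M: "\<And>i. \<bar>gy i\<bar> \<le> M"
  shows "zconv (rev_seq a) (\<lambda>r. infsum (\<lambda>i. zconv b v (i - r) * gy i) UNIV) = zconv (rev_seq v) gy"
proof
  fix k
  define c where "c = zconv b v"
  have c: "c summable_on UNIV" unfolding c_def by (rule zconv_summable[OF b v])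
  have ac: "zconv a c = v" unfolding c_def
    by (simp add: zconv_assoc a b v ab zconv_delta_left)
  have ra: "(\<lambda>p. a (- p)) summable_on UNIV" using a summable_neg_int by blast
  define H where "H = (\<lambda>p i. a (- p) * (c (i - (k - p)) * gy i))"
  have Hs: "(\<lambda>(p,i). H p i) summable_on UNIV"
  proof (rule summ_comparison[of "\<lambda>(p,i). (a (- p) * c (i + (p - k))) * M"])
    show "(\<lambda>(p,i). (a (- p) * c (i + (p - k))) * M) summable_on UNIV"
      using summable_on_cmult_left[OF summ_family[OF ra c, of "\<lambda>p. p - k"], of M]
      by (simp add: case_prod_unfold)
    fix x :: "int \<times> int"
    obtain p i where x: "x = (p,i)" by fastforce
    have "\<bar>a (- p)\<bar> * \<bar>c (i + (p - k))\<bar> * \<bar>gy i\<bar> \<le> \<bar>a (- p)\<bar> * \<bar>c (i + (p - k))\<bar> * M"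
      by (intro mult_left_mono M) auto
    moreover have "M \<ge> 0" using M[of 0] by linarith
    ultimately show "\<bar>case x of (p, i) \<Rightarrow> H p i\<bar> \<le> \<bar>case x of (p, i) \<Rightarrow> a (- p) * c (i + (p - k)) * M\<bar>"
      unfolding H_def x by (simp add: abs_mult mult.assoc algebra_simps)
  qed
  have "zconv (rev_seq a) (\<lambda>r. infsum (\<lambda>i. c (i - r) * gy i) UNIV) k
      = infsum (\<lambda>p. infsum (\<lambda>i. H p i) UNIV) UNIV"
    unfolding zconv_def rev_seq_def H_def by (simp add: infsum_cmult_right')
  also have "\<dots> = infsum (\<lambda>i. infsum (\<lambda>p. H p i) UNIV) UNIV"
    by (rule infsum_swap_banach) (use Hs in simp)
  also have "\<dots> = infsum (\<lambda>i. zconv a c (i - k) * gy i) UNIV"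
  proof (rule infsum_cong)
    fix i
    have "infsum (\<lambda>p. H p i) UNIV = infsum (\<lambda>p. a (- p) * c (i - (k - p))) UNIV * gy i"
      unfolding H_def by (simp add: infsum_cmult_left'[symmetric] mult.assoc)
    also have "infsum (\<lambda>p. a (- p) * c (i - (k - p))) UNIV = zconv a c (i - k)"
      unfolding zconv_def
      by (rule infsum_reindex_bij_witness[of _ "\<lambda>q. - q" "\<lambda>p. - p"]) (auto simp: algebra_simps)
    finally show "infsum (\<lambda>p. H p i) UNIV = zconv a c (i - k) * gy i" .
  qed
  also have "\<dots> = infsum (\<lambda>i. v (i - k) * gy i) UNIV" by (simp add: ac)
  also have "\<dots> = zconv (rev_seq v) gy k"
    unfolding zconv_def rev_seq_def
    by (rule infsum_reindex_bij_witness[of _ "\<lambda>p. k - p" "\<lambda>i. k - i"]) auto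
  finally show "zconv (rev_seq a) (\<lambda>r. infsum (\<lambda>i. zconv b v (i - r) * gy i) UNIV) k = zconv (rev_seq v) gy k"
    by (simp add: c_def)
qed


lemma shift_delta_summable: "(\<lambda>j. zdelta (j - r)) summable_on UNIV"
  using shift_summable[OF zdelta_summable, of r] by (simp add: shift_def)

lemma x_pert:
  assumes a: "a summable_on UNIV" and b: "b summable_on UNIV" and w: "w summable_on UNIV"
    and x: "x summable_on UNIV" and y: "y summable_on UNIV"
    and ba: "zconv b a = zdelta" and ab: "zconv a b = zdelta" and ay: "zconv a y = zconv w x"
  shows "zarma_sol a w (\<lambda>j. x j + t * zdelta (j - r)) = (\<lambda>i. y i + t * shift r (zconv b w) i)"
proof (rule zarma_sol_eq[OF a b ba])
  have s: "shift r (zconv b w) summable_on UNIV" by (intro shift_summable zconv_summable b w)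
  show "(\<lambda>i. y i + t * shift r (zconv b w) i) summable_on UNIV" by (rule lin_summable[OF y s])
  have "zconv a (\<lambda>i. y i + t * shift r (zconv b w) i) = (\<lambda>i. zconv a y i + t * zconv a (shift r (zconv b w)) i)"
    by (rule zconv_lin_right[OF a y s])
  also have "zconv a (shift r (zconv b w)) = shift r w"
    by (simp add: zconv_shift_right zconv_assoc a b w ab zconv_delta_left)
  also have "(\<lambda>i. zconv a y i + t * shift r w i) = (\<lambda>i. zconv w x i + t * zconv w (\<lambda>j. zdelta (j - r)) i)"
    by (simp add: ay zconv_shift_delta)
  also have "\<dots> = zconv w (\<lambda>j. x j + t * zdelta (j - r))"
    by (rule zconv_lin_right[symmetric, OF w x shift_delta_summable])
  finally show "zconv a (\<lambda>i. y i + t * shift r (zconv b w) i) = zconv w (\<lambda>j. x j + t * zdelta (j - r))" .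
qed

lemma w_pert:
  assumes a: "a summable_on UNIV" and b: "b summable_on UNIV" and w: "w summable_on UNIV"
    and x: "x summable_on UNIV" and y: "y summable_on UNIV"
    and ba: "zconv b a = zdelta" and ab: "zconv a b = zdelta" and ay: "zconv a y = zconv w x"
  shows "zarma_sol a (\<lambda>j. w j + t * zdelta (j - r)) x = (\<lambda>i. y i + t * shift r (zconv b x) i)"
proof (rule zarma_sol_eq[OF a b ba])
  have s: "shift r (zconv b x) summable_on UNIV" by (intro shift_summable zconv_summable b x)
  show "(\<lambda>i. y i + t * shift r (zconv b x) i) summable_on UNIV" by (rule lin_summable[OF y s])
  have "zconv a (\<lambda>i. y i + t * shift r (zconv b x) i) = (\<lambda>i. zconv a y i + t * zconv a (shift r (zconv b x)) i)"
    by (rule zconv_lin_right[OF a y s])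
  also have "zconv a (shift r (zconv b x)) = shift r x"
    by (simp add: zconv_shift_right zconv_assoc a b x ab zconv_delta_left)
  also have "(\<lambda>i. zconv a y i + t * shift r x i) = (\<lambda>i. zconv w x i + t * zconv (\<lambda>j. zdelta (j - r)) x i)"
    using zconv_shift_delta[of x r] zconv_comm[of x] by (simp add: ay)
  also have "\<dots> = zconv (\<lambda>j. w j + t * zdelta (j - r)) x"
    by (rule zconv_lin_left[symmetric, OF x w shift_delta_summable])
  finally show "zconv a (\<lambda>i. y i + t * shift r (zconv b x) i) = zconv (\<lambda>j. w j + t * zdelta (j - r)) x" .
qed

lemma deriv_affine: "deriv (\<lambda>t. c0 + t * (c1::real)) 0 = c1"
proof -
  have "((\<lambda>t. c0 + t * c1) has_field_derivative c1) (at 0)"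
    by (auto intro!: derivative_eq_intros)
  then show ?thesis by (rule DERIV_imp_deriv)
qed

lemma n1_add: assumes "f summable_on UNIV" "g summable_on UNIV"
  shows "n1 (\<lambda>i. f i + g i) \<le> n1 f + n1 g"
proof -
  have "n1 (\<lambda>i. f i + g i) \<le> infsum (\<lambda>i. \<bar>f i\<bar> + \<bar>g i\<bar>) UNIV"
    unfolding n1_def
    by (intro infsum_mono abs_summ summable_on_add assms) (auto simp: abs_triangle_ineq)
  also have "\<dots> = n1 f + n1 g"
    unfolding n1_def by (intro infsum_add abs_summ assms)
  finally show ?thesis .
qed

lemma n1_scale: "n1 (\<lambda>i. t * f i) = \<bar>t\<bar> * n1 f"
  unfolding n1_def by (simp add: abs_mult infsum_cmult_right')

lemma n1_zero: assumes "f summable_on UNIV" "n1 f \<le> 0" shows "f = (\<lambda>_. 0)"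
proof
  fix i show "f i = 0" using abs_le_n1[OF assms(1), of i] assms(2) by simp
qed

lemma zconv_zero: "zconv u (\<lambda>_. 0) = (\<lambda>_. 0)"
  unfolding zconv_def by simp

lemma a_pert_eq:
  assumes a: "a summable_on UNIV" and z: "z summable_on UNIV"
  shows "zconv (\<lambda>j. a j + t * zdelta (j - r)) z = (\<lambda>i. zconv a z i + t * shift r z i)"
proof -
  have "zconv (\<lambda>j. zdelta (j - r)) z = shift r z"
    using zconv_shift_delta[of z r] zconv_comm[of "\<lambda>j. zdelta (j - r)" z] by simp
  then show ?thesis using zconv_lin_left[OF z a shift_delta_summable, of t] by simp
qed

lemma a_pert_unique:
  assumes a: "a summable_on UNIV" and b: "b summable_on UNIV" and ba: "zconv b a = zdelta"
    and tK: "\<bar>t\<bar> * n1 b < 1"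
    and z1: "z1 summable_on UNIV" and z2: "z2 summable_on UNIV"
    and eq: "zconv (\<lambda>j. a j + t * zdelta (j - r)) z1 = zconv (\<lambda>j. a j + t * zdelta (j - r)) z2"
  shows "z1 = z2"
proof -
  define d where "d = (\<lambda>i. z1 i + (-1) * z2 i)"
  have d: "d summable_on UNIV" unfolding d_def by (rule lin_summable[OF z1 z2])
  have "zconv (\<lambda>j. a j + t * zdelta (j - r)) d = (\<lambda>_. 0)"
    unfolding d_def
    by (subst zconv_lin_right[OF lin_summable[OF a shift_delta_summable] z1 z2]) (simp add: eq)
  then have e1: "(\<lambda>i. zconv a d i + t * shift r d i) = (\<lambda>_. 0)"
    by (simp add: a_pert_eq[OF a d])
  have "zconv b (\<lambda>i. zconv a d i + t * shift r d i) = (\<lambda>i. zconv b (zconv a d) i + t * zconv b (shift r d) i)"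
    by (rule zconv_lin_right[OF b zconv_summable[OF a d] shift_summable[OF d]])
  also have "\<dots> = (\<lambda>i. d i + t * shift r (zconv b d) i)"
    by (simp add: zconv_assoc a b d ba zconv_delta_left zconv_shift_right)
  finally have "(\<lambda>i. d i + t * shift r (zconv b d) i) = (\<lambda>_. 0)"
    by (simp add: e1 zconv_zero)
  then have "d i = (- t) * shift r (zconv b d) i" for i
    using fun_cong[OF \<open>(\<lambda>i. d i + t * shift r (zconv b d) i) = (\<lambda>_. 0)\<close>, of i] by simp
  then have "d = (\<lambda>i. (- t) * shift r (zconv b d) i)" by (rule ext)
  then have "n1 d = \<bar>- t\<bar> * n1 (shift r (zconv b d))"
    using n1_scale[of "- t" "shift r (zconv b d)"] by simp
  then have "n1 d = \<bar>t\<bar> * n1 (zconv b d)" by (simp add: n1_shift)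
  also have "\<dots> \<le> \<bar>t\<bar> * (n1 b * n1 d)"
    by (intro mult_left_mono zconv_n1 b d) auto
  finally have "n1 d * (1 - \<bar>t\<bar> * n1 b) \<le> 0" by (simp add: algebra_simps)
  then have "n1 d \<le> 0" using tK by (simp add: mult_le_0_iff)
  then have "d = (\<lambda>_. 0)" by (rule n1_zero[OF d])
  then have "z1 i = z2 i" for i using fun_cong[OF \<open>d = (\<lambda>_. 0)\<close>, of i] unfolding d_def by simp
  then show ?thesis by (rule ext)
qed


lemma infsum_nat_head:
  fixes g :: "nat \<Rightarrow> real"
  assumes g: "g summable_on UNIV"
  shows "infsum g UNIV = g 0 + infsum (\<lambda>n. g (Suc n)) UNIV"
proof -
  have U: "UNIV = {0} \<union> range Suc" using not0_implies_Suc by auto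
  have s1: "g summable_on {0}" by simp
  have s2: "g summable_on range Suc" by (rule summable_on_subset_banach[OF g]) auto
  have "infsum g UNIV = infsum g {0} + infsum g (range Suc)"
    by (subst U, rule infsum_Un_disjoint[OF s1 s2]) auto
  also have "infsum g (range Suc) = infsum (g \<circ> Suc) UNIV"
    by (rule infsum_reindex) auto
  finally show ?thesis by (simp add: o_def)
qed

lemma geo_summable:
  fixes q M :: real
  assumes "0 \<le> q" "q < 1" "0 \<le> M"
  shows "(\<lambda>n::nat. q ^ n * M) summable_on UNIV"
proof -
  have "summable (\<lambda>n::nat. q ^ n * M)"
    by (rule summable_mult2, rule summable_geometric) (use assms in auto)
  then show ?thesis
    by (subst summable_on_UNIV_nonneg_real_iff) (use assms in auto)
qed

lemma neumann_exists:
  assumes c: "c summable_on UNIV" and y: "y summable_on UNIV" and tK: "\<bar>t\<bar> * n1 c < 1"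
  shows "\<exists>z. z summable_on UNIV \<and> (\<lambda>i. z i + t * zconv c z i) = y"
proof -
  define K where "K = n1 c"
  define q where "q = \<bar>t\<bar> * K"
  have K0: "K \<ge> 0" unfolding K_def by (rule n1_nonneg)
  have q0: "q \<ge> 0" and q1: "q < 1" using tK K0 unfolding q_def K_def by auto
  define v where "v = rec_nat y (\<lambda>_ u. zconv c u)"
  have v0: "v 0 = y" and vS: "v (Suc n) = zconv c (v n)" for n by (simp_all add: v_def)
  have vs: "v n summable_on UNIV" for n
    by (induction n) (simp_all add: v0 vS y zconv_summable c)
  have vb: "n1 (v n) \<le> K ^ n * n1 y" for n
  proof (induction n)
    case 0 then show ?case by (simp add: v0)
  next
    case (Suc n)
    have "n1 (v (Suc n)) \<le> K * n1 (v n)" unfolding vS K_def by (rule zconv_n1[OF c vs])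
    also have "\<dots> \<le> K * (K ^ n * n1 y)" by (rule mult_left_mono[OF Suc K0])
    finally show ?case by simp
  qed
  have vpt: "\<bar>t\<bar> ^ n * \<bar>v n j\<bar> \<le> q ^ n * n1 y" for n j
  proof -
    have "\<bar>v n j\<bar> \<le> K ^ n * n1 y" using abs_le_n1[OF vs, of n j] vb[of n] by linarith
    then have "\<bar>t\<bar> ^ n * \<bar>v n j\<bar> \<le> \<bar>t\<bar> ^ n * (K ^ n * n1 y)" by (rule mult_left_mono) auto
    then show ?thesis by (simp add: q_def power_mult_distrib mult.assoc)
  qed
  have geo: "(\<lambda>n::nat. q ^ n * n1 y) summable_on UNIV" by (rule geo_summable[OF q0 q1 n1_nonneg])
  define \<Phi> where "\<Phi> = (\<lambda>n i. (- t) ^ n * v n i)"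
  have \<Phi>s: "(\<lambda>(n,i). \<Phi> n i) summable_on UNIV"
  proof -
    have "(\<lambda>x. norm ((\<lambda>(n,i). \<Phi> n i) x)) summable_on Sigma UNIV (\<lambda>_. UNIV)"
    proof (rule iffD2[OF Infinite_Sum.abs_summable_on_Sigma_iff], intro conjI ballI)
      fix n :: nat
      show "(\<lambda>x. norm ((\<lambda>i. case (n, i) of (n, i) \<Rightarrow> \<Phi> n i) x)) summable_on UNIV"
        using abs_summ[OF summable_on_cmult_right[OF vs, of "(- t) ^ n" n]]
        by (simp add: real_norm_def \<Phi>_def)
    next
      have eq: "infsum (\<lambda>i. norm (case (n, i) of (n, i) \<Rightarrow> \<Phi> n i)) UNIV = \<bar>t\<bar> ^ n * n1 (v n)" for n
        by (simp add: real_norm_def \<Phi>_def abs_mult power_abs infsum_cmult_right' n1_def)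
      show "(\<lambda>x. norm ((\<lambda>n. infsum (\<lambda>i. norm (case (n, i) of (n, i) \<Rightarrow> \<Phi> n i)) UNIV) x)) summable_on UNIV"
        unfolding eq
      proof (rule summable_on_comparison_test[OF geo])
        fix n :: nat
        have "\<bar>t\<bar> ^ n * n1 (v n) \<le> \<bar>t\<bar> ^ n * (K ^ n * n1 y)" by (rule mult_left_mono[OF vb]) auto
        then show "norm (\<bar>t\<bar> ^ n * n1 (v n)) \<le> q ^ n * n1 y"
          using n1_nonneg[of "v n"] by (simp add: q_def power_mult_distrib mult.assoc)
      qed auto
    qed
    then show ?thesis using abs_summ_iff[of "\<lambda>(n,i). \<Phi> n i" UNIV] by (simp add: real_norm_def)
  qed
  have \<Phi>n: "(\<lambda>n. \<Phi> n i) summable_on UNIV" for i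
  proof -
    have "(\<lambda>(i,n). \<Phi> n i) summable_on UNIV \<times> UNIV"
      using \<Phi>s by (subst summable_on_swap) (simp add: case_prod_unfold)
    then show ?thesis using summable_on_SigmaD1[of "\<lambda>i n. \<Phi> n i" UNIV "\<lambda>_. UNIV" i] by simp
  qed
  define z where "z = (\<lambda>i. infsum (\<lambda>n. \<Phi> n i) UNIV)"
  have zs: "z summable_on UNIV"
  proof -
    have "(\<lambda>(i,n). \<Phi> n i) summable_on UNIV \<times> UNIV"
      using \<Phi>s by (subst summable_on_swap) (simp add: case_prod_unfold)
    then show ?thesis unfolding z_def
      using summable_on_Sigma_banach[of "\<lambda>i n. \<Phi> n i" UNIV "\<lambda>_. UNIV"] by simp
  qed
  have cz: "zconv c z i = infsum (\<lambda>n. (- t) ^ n * v (Suc n) i) UNIV" for i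
  proof -
    define \<Psi> where "\<Psi> = (\<lambda>p n. c p * \<Phi> n (i - p))"
    have \<Psi>s: "(\<lambda>(p,n). \<Psi> p n) summable_on UNIV"
    proof (rule summ_comparison[OF summ_prod[OF c geo]])
      fix x :: "int \<times> nat"
      obtain p n where x: "x = (p,n)" by fastforce
      have "\<bar>c p\<bar> * (\<bar>t\<bar> ^ n * \<bar>v n (i - p)\<bar>) \<le> \<bar>c p\<bar> * (q ^ n * n1 y)"
        by (rule mult_left_mono[OF vpt]) auto
      then show "\<bar>case x of (p, n) \<Rightarrow> \<Psi> p n\<bar> \<le> \<bar>case x of (p, q') \<Rightarrow> c p * (q ^ q' * n1 y)\<bar>"
        unfolding x \<Psi>_def \<Phi>_def using q0 n1_nonneg[of y]
        by (simp add: abs_mult power_abs)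
    qed
    have "zconv c z i = infsum (\<lambda>p. infsum (\<lambda>n. \<Psi> p n) UNIV) UNIV"
      unfolding zconv_def z_def \<Psi>_def by (simp add: infsum_cmult_right')
    also have "\<dots> = infsum (\<lambda>n. infsum (\<lambda>p. \<Psi> p n) UNIV) UNIV"
      by (rule infsum_swap_banach) (use \<Psi>s in simp)
    also have "\<dots> = infsum (\<lambda>n. (- t) ^ n * v (Suc n) i) UNIV"
      unfolding \<Psi>_def \<Phi>_def vS zconv_def
      by (simp add: infsum_cmult_right'[symmetric] algebra_simps)
    finally show ?thesis .
  qed
  have "z i + t * zconv c z i = y i" for i
  proof -
    have "z i = \<Phi> 0 i + infsum (\<lambda>n. \<Phi> (Suc n) i) UNIV"
      unfolding z_def by (rule infsum_nat_head[OF \<Phi>n])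
    also have "infsum (\<lambda>n. \<Phi> (Suc n) i) UNIV = - t * infsum (\<lambda>n. (- t) ^ n * v (Suc n) i) UNIV"
      unfolding \<Phi>_def by (simp add: infsum_cmult_right'[symmetric] mult.assoc)
    finally show ?thesis by (simp add: cz \<Phi>_def v0)
  qed
  then show ?thesis using zs by blast
qed


lemma a_sol:
  assumes a: "a summable_on UNIV" and b: "b summable_on UNIV" and y: "y summable_on UNIV"
    and ba: "zconv b a = zdelta" and ab: "zconv a b = zdelta" and ay: "zconv a y = zconv w x"
    and tK: "\<bar>t\<bar> * n1 b < 1"
  shows "zarma_sol (\<lambda>j. a j + t * zdelta (j - r)) w x summable_on UNIV \<and>
         (\<lambda>i. zarma_sol (\<lambda>j. a j + t * zdelta (j - r)) w x i
              + t * zconv (shift r b) (zarma_sol (\<lambda>j. a j + t * zdelta (j - r)) w x) i) = y"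
proof -
  have c: "shift r b summable_on UNIV" by (rule shift_summable[OF b])
  obtain z where z: "z summable_on UNIV" and ze: "(\<lambda>i. z i + t * zconv (shift r b) z i) = y"
    using neumann_exists[OF c y] tK n1_shift[of r b] by auto
  have eqz: "zconv (\<lambda>j. a j + t * zdelta (j - r)) z = zconv w x"
  proof -
    have "zconv a (zconv (shift r b) z) = shift r z"
      using zconv_assoc[OF a b z] by (simp add: zconv_shift_right zconv_shift_left ab zconv_delta_left)
    then have "zconv a y = (\<lambda>i. zconv a z i + t * shift r z i)"
      using zconv_lin_right[OF a z zconv_summable[OF c z], of t] ze by simp
    then show ?thesis using a_pert_eq[OF a z, of t r] ay by simp
  qed
  have "zarma_sol (\<lambda>j. a j + t * zdelta (j - r)) w x = z"
    unfolding zarma_sol_def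
  proof (rule the_equality)
    show "z summable_on UNIV \<and> zconv (\<lambda>j. a j + t * zdelta (j - r)) z = zconv w x" using z eqz by simp
    fix z' assume "z' summable_on UNIV \<and> zconv (\<lambda>j. a j + t * zdelta (j - r)) z' = zconv w x"
    then show "z' = z" using a_pert_unique[OF a b ba tK, of z' z r] z eqz by auto
  qed
  then show ?thesis using z ze by simp
qed

lemma a_deriv:
  assumes a: "a summable_on UNIV" and b: "b summable_on UNIV" and y: "y summable_on UNIV"
    and ba: "zconv b a = zdelta" and ab: "zconv a b = zdelta" and ay: "zconv a y = zconv w x"
  shows "zpartial (\<lambda>a'. zarma_sol a' w x) a r i = - zconv b y (i - r)"
proof -
  define K where "K = n1 b"
  define c where "c = shift r b"
  have c: "c summable_on UNIV" unfolding c_def by (rule shift_summable[OF b])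
  have nc: "n1 c = K" unfolding c_def K_def by (rule n1_shift)
  have K0: "K \<ge> 0" unfolding K_def by (rule n1_nonneg)
  define Z where "Z = (\<lambda>t. zarma_sol (\<lambda>j. a j + t * zdelta (j - r)) w x)"
  have Zs: "Z t summable_on UNIV" and Ze: "(\<lambda>i. Z t i + t * zconv c (Z t) i) = y"
    if "\<bar>t\<bar> * K < 1" for t
    using a_sol[OF a b y ba ab ay, of t r] that unfolding Z_def c_def K_def by auto
  have Z0: "Z 0 = y" using Ze[of 0] by simp
  have bnd: "\<bar>zconv c (Z t) i - zconv c y i\<bar> \<le> 2 * K ^ 2 * n1 y * \<bar>t\<bar>" if tK: "\<bar>t\<bar> * K \<le> 1/2" for t
  proof -
    have tK1: "\<bar>t\<bar> * K < 1" using tK by linarith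
    note zs = Zs[OF tK1]
    have cz: "zconv c (Z t) summable_on UNIV" by (rule zconv_summable[OF c zs])
    have e: "Z t = (\<lambda>i. y i + (- t) * zconv c (Z t) i)"
      using Ze[OF tK1] by (metis (no_types, lifting) add_diff_cancel_right' diff_minus_eq_add mult_minus_left ext)
    have ncz: "n1 (zconv c (Z t)) \<le> K * n1 (Z t)" using zconv_n1[OF c zs] nc by simp
    have "n1 (Z t) \<le> n1 y + n1 (\<lambda>i. (- t) * zconv c (Z t) i)"
      by (subst e, rule n1_add[OF y summable_on_cmult_right[OF cz]])
    also have "n1 (\<lambda>i. (- t) * zconv c (Z t) i) = \<bar>t\<bar> * n1 (zconv c (Z t))"
      using n1_scale[of "-t" "zconv c (Z t)"] by simp
    also have "\<bar>t\<bar> * n1 (zconv c (Z t)) \<le> \<bar>t\<bar> * (K * n1 (Z t))" by (rule mult_left_mono[OF ncz]) auto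
    also have "\<bar>t\<bar> * (K * n1 (Z t)) \<le> 1/2 * n1 (Z t)"
      using mult_right_mono[OF tK n1_nonneg[of "Z t"]] by (simp add: mult.assoc)
    finally have nZ: "n1 (Z t) \<le> 2 * n1 y" by linarith
    define d where "d = (\<lambda>j. Z t j + (-1) * y j)"
    have ds: "d summable_on UNIV" unfolding d_def by (rule lin_summable[OF zs y])
    have "d = (\<lambda>j. (- t) * zconv c (Z t) j)"
      unfolding d_def by (subst e) simp
    then have "n1 d = \<bar>t\<bar> * n1 (zconv c (Z t))"
      using n1_scale[of "-t" "zconv c (Z t)"] by simp
    also have "\<dots> \<le> \<bar>t\<bar> * (K * n1 (Z t))" by (rule mult_left_mono[OF ncz]) auto
    also have "\<dots> \<le> \<bar>t\<bar> * (K * (2 * n1 y))" by (intro mult_left_mono nZ K0) auto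
    finally have nd: "n1 d \<le> \<bar>t\<bar> * (K * (2 * n1 y))" .
    have "zconv c (Z t) i - zconv c y i = zconv c d i"
      unfolding d_def using zconv_lin_right[OF c zs y, of "-1"] by simp
    also have "\<bar>zconv c d i\<bar> \<le> n1 (zconv c d)" by (rule abs_le_n1[OF zconv_summable[OF c ds]])
    also have "\<dots> \<le> K * n1 d" using zconv_n1[OF c ds] nc by simp
    also have "\<dots> \<le> K * (\<bar>t\<bar> * (K * (2 * n1 y)))" by (rule mult_left_mono[OF nd K0])
    finally show ?thesis by (simp add: power2_eq_square algebra_simps)
  qed
  have quot: "(Z h i - Z 0 i) / h = - zconv c (Z h) i" if "h \<noteq> 0" "\<bar>h\<bar> * K < 1" for h
  proof -
    have "Z h i + h * zconv c (Z h) i = y i" using fun_cong[OF Ze[OF that(2)], of i] by simp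
    then have "Z h i - Z 0 i = h * (- zconv c (Z h) i)" by (simp add: Z0 algebra_simps)
    then show ?thesis using that(1) by simp
  qed
  have "((\<lambda>t. Z t i) has_field_derivative - zconv c y i) (at 0)"
  proof (subst DERIV_def, subst LIM_eq, intro allI impI)
    fix e :: real assume e: "e > 0"
    define s where "s = min (1 / (2 * K + 1)) (e / (2 * K ^ 2 * n1 y + 1))"
    have Ky: "2 * K ^ 2 * n1 y \<ge> 0" using K0 n1_nonneg[of y] by simp
    have "e / (2 * K ^ 2 * n1 y + 1) > 0" by (intro divide_pos_pos e) (use Ky in linarith)
    then have s0: "s > 0" unfolding s_def using K0 by auto
    show "\<exists>s>0. \<forall>h. h \<noteq> 0 \<and> norm (h - 0) < s \<longrightarrow>
            norm ((Z (0 + h) i - Z 0 i) / h - - zconv c y i) < e"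
    proof (intro exI[of _ s] conjI allI impI s0)
      fix h :: real assume h: "h \<noteq> 0 \<and> norm (h - 0) < s"
      have h1: "\<bar>h\<bar> < 1 / (2 * K + 1)" and h2: "\<bar>h\<bar> < e / (2 * K ^ 2 * n1 y + 1)"
        using h unfolding s_def by auto
      have "\<bar>h\<bar> * (2 * K + 1) < 1" using h1 K0 by (simp add: field_simps)
      then have hK: "\<bar>h\<bar> * K \<le> 1/2" using K0 by (simp add: algebra_simps)
      have "\<bar>h\<bar> * (2 * K ^ 2 * n1 y + 1) < e" using h2 Ky by (simp add: field_simps)
      then have he: "2 * K ^ 2 * n1 y * \<bar>h\<bar> < e" by (simp add: algebra_simps)
      have "(Z (0 + h) i - Z 0 i) / h - - zconv c y i = - (zconv c (Z h) i - zconv c y i)"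
        using quot[of h] h hK by simp
      then have "norm ((Z (0 + h) i - Z 0 i) / h - - zconv c y i) = \<bar>zconv c (Z h) i - zconv c y i\<bar>"
        by simp
      also have "\<dots> \<le> 2 * K ^ 2 * n1 y * \<bar>h\<bar>" by (rule bnd[OF hK])
      finally show "norm ((Z (0 + h) i - Z 0 i) / h - - zconv c y i) < e" using he by linarith
    qed
  qed
  then have "deriv (\<lambda>t. Z t i) 0 = - zconv c y i" by (rule DERIV_imp_deriv)
  moreover have "zconv c y = shift r (zconv b y)" unfolding c_def by (rule zconv_shift_left)
  ultimately show ?thesis unfolding zpartial_def Z_def by (simp add: shift_def)
qed


lemma zconv_uminus_right: "zconv u (\<lambda>r. - g r) = (\<lambda>i. - zconv u g i)"
  unfolding zconv_def by (simp add: infsum_uminus)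

lemma part1:
  "\<forall>(a::int \<Rightarrow> real) ainv w x y gy.
            a summable_on UNIV \<and> ainv summable_on UNIV \<and> w summable_on UNIV \<and>
            x summable_on UNIV \<and> y summable_on UNIV \<and> bounded (range gy) \<and>
            zconv a ainv = zdelta \<and> zconv ainv a = zdelta \<and>
            zconv a y = zconv w x \<longrightarrow>
            (let gx = zchain_grad (\<lambda>x'. zarma_sol a w x') x gy;
                 gw = zchain_grad (\<lambda>w'. zarma_sol a w' x) w gy;
                 ga = zchain_grad (\<lambda>a'. zarma_sol a' w x) a gy
             in zconv (rev_seq a) gx = zconv (rev_seq w) gy \<and>
                (\<lambda>i. - zconv (rev_seq a) ga i) = zconv (rev_seq y) gy \<and>
                zconv (rev_seq a) gw = zconv (rev_seq x) gy)"
proof (intro allI impI)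
  fix a b w x y :: "int \<Rightarrow> real" and gy :: "int \<Rightarrow> real"
  assume H: "a summable_on UNIV \<and> b summable_on UNIV \<and> w summable_on UNIV \<and>
            x summable_on UNIV \<and> y summable_on UNIV \<and> bounded (range gy) \<and>
            zconv a b = zdelta \<and> zconv b a = zdelta \<and> zconv a y = zconv w x"
  then have a: "a summable_on UNIV" and b: "b summable_on UNIV" and w: "w summable_on UNIV"
    and x: "x summable_on UNIV" and y: "y summable_on UNIV" and bd: "bounded (range gy)"
    and ab: "zconv a b = zdelta" and ba: "zconv b a = zdelta" and ay: "zconv a y = zconv w x"
    by auto
  obtain M where M: "\<And>i. \<bar>gy i\<bar> \<le> M"
    using bd unfolding bounded_iff by auto
  have gx: "zchain_grad (\<lambda>x'. zarma_sol a w x') x gy = (\<lambda>r. infsum (\<lambda>i. zconv b w (i - r) * gy i) UNIV)"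
    unfolding zchain_grad_def zpartial_def
    by (simp add: x_pert[OF a b w x y ba ab ay] deriv_affine shift_def)
  have gw: "zchain_grad (\<lambda>w'. zarma_sol a w' x) w gy = (\<lambda>r. infsum (\<lambda>i. zconv b x (i - r) * gy i) UNIV)"
    unfolding zchain_grad_def zpartial_def
    by (simp add: w_pert[OF a b w x y ba ab ay] deriv_affine shift_def)
  have ga: "zchain_grad (\<lambda>a'. zarma_sol a' w x) a gy = (\<lambda>r. - infsum (\<lambda>i. zconv b y (i - r) * gy i) UNIV)"
    unfolding zchain_grad_def
    by (simp add: a_deriv[OF a b y ba ab ay] infsum_uminus)
  show "let gx = zchain_grad (\<lambda>x'. zarma_sol a w x') x gy;
                 gw = zchain_grad (\<lambda>w'. zarma_sol a w' x) w gy;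
                 ga = zchain_grad (\<lambda>a'. zarma_sol a' w x) a gy
             in zconv (rev_seq a) gx = zconv (rev_seq w) gy \<and>
                (\<lambda>i. - zconv (rev_seq a) ga i) = zconv (rev_seq y) gy \<and>
                zconv (rev_seq a) gw = zconv (rev_seq x) gy"
    unfolding Let_def gx gw ga zconv_uminus_right
    using grad_identity[OF a b w ab M] grad_identity[OF a b x ab M] grad_identity[OF a b y ab M]
    by simp
qed


definition cd :: "real^('n::{finite,comm_ring_1})" where
  "cd = (\<chi> i. if i = 0 then 1 else 0)"

lemma cconv_nth: "cconv u v $ i = (\<Sum>p\<in>UNIV. u $ p * v $ (i - p))"
  by (simp add: cconv_def)

lemma crev_nth: "crev u $ i = u $ (- i)"
  by (simp add: crev_def)

lemma cconv_comm: "cconv u v = cconv v u"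
proof (rule vec_eq_iff[THEN iffD2], rule allI)
  fix i
  show "cconv u v $ i = cconv v u $ i"
    unfolding cconv_nth
    by (rule sum.reindex_bij_witness[of _ "\<lambda>q. i - q" "\<lambda>p. i - p"]) auto
qed

lemma cconv_assoc: "cconv u (cconv v w) = cconv (cconv u v) w"
proof (rule vec_eq_iff[THEN iffD2], rule allI)
  fix i
  have "cconv u (cconv v w) $ i = (\<Sum>p\<in>UNIV. \<Sum>q\<in>UNIV. u $ p * (v $ q * w $ (i - p - q)))"
    unfolding cconv_nth by (simp add: sum_distrib_left algebra_simps)
  also have "\<dots> = (\<Sum>p\<in>UNIV. \<Sum>s\<in>UNIV. u $ p * v $ (s - p) * w $ (i - s))"
  proof (rule sum.cong[OF refl])
    fix p
    show "(\<Sum>q\<in>UNIV. u $ p * (v $ q * w $ (i - p - q))) = (\<Sum>s\<in>UNIV. u $ p * v $ (s - p) * w $ (i - s))"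
      by (rule sum.reindex_bij_witness[of _ "\<lambda>s. s - p" "\<lambda>q. q + p"]) (auto simp: algebra_simps)
  qed
  also have "\<dots> = (\<Sum>s\<in>UNIV. \<Sum>p\<in>UNIV. u $ p * v $ (s - p) * w $ (i - s))"
    by (rule sum.swap)
  also have "\<dots> = cconv (cconv u v) w $ i"
    unfolding cconv_nth by (simp add: sum_distrib_right)
  finally show "cconv u (cconv v w) $ i = cconv (cconv u v) w $ i" .
qed

lemma cconv_cd_left:
  fixes v :: "real^'n::{finite,comm_ring_1}"
  shows "cconv cd v = v"
proof (rule vec_eq_iff[THEN iffD2], rule allI)
  fix i
  have "cconv cd v $ i = (\<Sum>p\<in>(UNIV::'n set). if p = 0 then v $ i else 0)"
    unfolding cconv_nth cd_def by (rule sum.cong[OF refl]) auto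
  then show "cconv cd v $ i = v $ i" by simp
qed

lemma cconv_cd_right: "cconv v cd = v"
  using cconv_cd_left cconv_comm by metis

lemma cconv_add_right: "cconv u (v + w) = cconv u v + cconv u w"
  by (simp add: vec_eq_iff cconv_nth algebra_simps sum.distrib)

lemma cconv_scale_right: "cconv u (c *\<^sub>R v) = c *\<^sub>R cconv u v"
  by (simp add: vec_eq_iff cconv_nth algebra_simps sum_distrib_left)

lemma cconv_add_left: "cconv (v + w) u = cconv v u + cconv w u"
  using cconv_add_right cconv_comm by metis

lemma cconv_scale_left: "cconv (c *\<^sub>R v) u = c *\<^sub>R cconv v u"
  using cconv_scale_right cconv_comm by metis

lemma cconv_linear: "linear (cconv u)"
  by (rule linearI) (simp_all add: cconv_add_right cconv_scale_right)

lemma cconv_bilinear: "bilinear cconv"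
  unfolding bilinear_def
proof (intro conjI allI)
  fix x show "linear (cconv x)" by (rule cconv_linear)
next
  fix y show "linear (\<lambda>x. cconv x y)"
    by (rule linearI) (simp_all add: cconv_add_left cconv_scale_left)
qed

lemma cconv_minus_right: "cconv u (- v) = - cconv u v"
  using linear_neg[OF cconv_linear] by blast

lemma cconv_diff_right: "cconv u (v - w) = cconv u v - cconv u w"
  using linear_diff[OF cconv_linear] by blast

lemma cconv_minus_left: "cconv (- v) u = - cconv v u"
  using cconv_minus_right cconv_comm by metis

lemma cconv_diff_left: "cconv (v - w) u = cconv v u - cconv w u"
  using cconv_diff_right cconv_comm by metis

lemma cconv_zero_right: "cconv u 0 = 0"
  by (simp add: vec_eq_iff cconv_nth)

lemma crev_cconv: "crev (cconv u v) = cconv (crev u) (crev v)"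
proof (rule vec_eq_iff[THEN iffD2], rule allI)
  fix i
  show "crev (cconv u v) $ i = cconv (crev u) (crev v) $ i"
    unfolding cconv_nth crev_nth
    by (rule sum.reindex_bij_witness[of _ "\<lambda>q. - q" "\<lambda>p. - p"]) auto
qed

lemma crev_cd: "crev cd = cd"
  by (simp add: vec_eq_iff crev_nth cd_def)

lemma cconv_adjoint: "gy \<bullet> cconv c h = cconv (crev c) gy \<bullet> h"
proof -
  have "gy \<bullet> cconv c h = (\<Sum>i\<in>UNIV. \<Sum>p\<in>UNIV. gy $ i * c $ p * h $ (i - p))"
    by (simp add: inner_vec_def cconv_nth sum_distrib_left algebra_simps)
  also have "\<dots> = (\<Sum>p\<in>UNIV. \<Sum>i\<in>UNIV. gy $ i * c $ p * h $ (i - p))" by (rule sum.swap)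
  also have "\<dots> = (\<Sum>p\<in>UNIV. \<Sum>j\<in>UNIV. gy $ (j + p) * c $ p * h $ j)"
  proof (rule sum.cong[OF refl])
    fix p
    show "(\<Sum>i\<in>UNIV. gy $ i * c $ p * h $ (i - p)) = (\<Sum>j\<in>UNIV. gy $ (j + p) * c $ p * h $ j)"
      by (rule sum.reindex_bij_witness[of _ "\<lambda>j. j + p" "\<lambda>i. i - p"]) auto
  qed
  also have "\<dots> = (\<Sum>j\<in>UNIV. \<Sum>p\<in>UNIV. gy $ (j + p) * c $ p * h $ j)" by (rule sum.swap)
  also have "\<dots> = (\<Sum>j\<in>UNIV. \<Sum>q\<in>UNIV. c $ (- q) * gy $ (j - q) * h $ j)"
  proof (rule sum.cong[OF refl])
    fix j
    show "(\<Sum>p\<in>UNIV. gy $ (j + p) * c $ p * h $ j) = (\<Sum>q\<in>UNIV. c $ (- q) * gy $ (j - q) * h $ j)"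
      by (rule sum.reindex_bij_witness[of _ "\<lambda>q. - q" "\<lambda>p. - p"]) auto
  qed
  also have "\<dots> = cconv (crev c) gy \<bullet> h"
    by (simp add: inner_vec_def cconv_nth crev_nth sum_distrib_right)
  finally show ?thesis .
qed

lemma cconv_bound: "\<exists>B>0. \<forall>u v. norm (cconv u v) \<le> B * norm u * norm (v::real^'n::{finite,comm_ring_1})"
  using bilinear_bounded_pos[OF cconv_bilinear] by blast


lemma char_struct:
  assumes surj: "surj (of_int :: int \<Rightarrow> 'n::{finite,comm_ring_1})"
  shows "of_nat CARD('n) = (0::'n) \<and> inj_on (of_nat :: nat \<Rightarrow> 'n) {..<CARD('n)} \<and>
         (of_nat :: nat \<Rightarrow> 'n) ` {..<CARD('n)} = UNIV"
proof -
  define N where "N = CARD('n)"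
  have N0: "N > 0" unfolding N_def by simp
  have "\<not> inj_on (of_nat :: nat \<Rightarrow> 'n) {..N}"
  proof
    assume "inj_on (of_nat :: nat \<Rightarrow> 'n) {..N}"
    then have "card {..N} \<le> card (UNIV :: 'n set)" by (rule card_inj_on_le) auto
    then show False by (simp add: N_def)
  qed
  then obtain i j where ij: "i \<le> N" "j \<le> N" "i \<noteq> j" "(of_nat i :: 'n) = of_nat j"
    unfolding inj_on_def by auto
  have "\<exists>m. 0 < m \<and> m \<le> N \<and> (of_nat m :: 'n) = 0"
  proof (cases "i < j")
    case True
    have "(of_nat j :: 'n) = of_nat i + of_nat (j - i)" using True by (simp flip: of_nat_add)
    then show ?thesis using ij True by (intro exI[of _ "j - i"]) auto
  next
    case False
    then have "j < i" using ij by simp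
    have "(of_nat i :: 'n) = of_nat j + of_nat (i - j)" using \<open>j < i\<close> by (simp flip: of_nat_add)
    then show ?thesis using ij \<open>j < i\<close> by (intro exI[of _ "i - j"]) auto
  qed
  then obtain m1 where m1: "0 < m1" "m1 \<le> N" "(of_nat m1 :: 'n) = 0" by auto
  define m where "m = (LEAST m. 0 < m \<and> (of_nat m :: 'n) = 0)"
  have m: "0 < m" "(of_nat m :: 'n) = 0"
    using LeastI[of "\<lambda>m. 0 < m \<and> (of_nat m :: 'n) = 0" m1] m1 unfolding m_def by auto
  have mle: "m \<le> N" using Least_le[of "\<lambda>m. 0 < m \<and> (of_nat m :: 'n) = 0" m1] m1 unfolding m_def by auto
  have mmin: "(of_nat k :: 'n) \<noteq> 0" if "0 < k" "k < m" for k
    using not_less_Least[of k "\<lambda>m. 0 < m \<and> (of_nat m :: 'n) = 0"] that unfolding m_def by auto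
  have ofint: "(of_int k :: 'n) = of_nat (nat (k mod int m))" for k
  proof -
    have "k = (k div int m) * int m + k mod int m" by simp
    then have "(of_int k :: 'n) = of_int (k div int m) * of_int (int m) + of_int (k mod int m)"
      by (metis of_int_add of_int_mult)
    also have "(of_int (int m) :: 'n) = 0" using m by simp
    also have "(of_int (k mod int m) :: 'n) = of_nat (nat (k mod int m))"
      using m by (simp add: of_nat_nat)
    finally show ?thesis by simp
  qed
  have sub: "UNIV \<subseteq> (of_nat :: nat \<Rightarrow> 'n) ` {..<m}"
  proof
    fix x :: 'n
    obtain k where "x = of_int k" using surj by (metis surjD)
    then have "x = of_nat (nat (k mod int m))" by (simp add: ofint)
    moreover have "nat (k mod int m) < m" using m by (simp add: nat_less_iff)
    ultimately show "x \<in> of_nat ` {..<m}" by (metis lessThan_iff rev_image_eqI)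
  qed
  have "N \<le> m"
  proof -
    have "N = card (UNIV :: 'n set)" by (simp add: N_def)
    also have "\<dots> \<le> card ((of_nat :: nat \<Rightarrow> 'n) ` {..<m})" using sub by (intro card_mono) auto
    also have "\<dots> \<le> card {..<m}" by (rule card_image_le) auto
    finally show ?thesis by simp
  qed
  then have mN: "m = N" using mle by simp
  have inj: "inj_on (of_nat :: nat \<Rightarrow> 'n) {..<N}"
  proof (rule inj_onI)
    fix i j assume i: "i \<in> {..<N}" and j: "j \<in> {..<N}" and e: "(of_nat i :: 'n) = of_nat j"
    show "i = j"
    proof (rule ccontr)
      assume "i \<noteq> j"
      then consider "i < j" | "j < i" by linarith
      then show False
      proof cases
        case 1
        have "(of_nat j :: 'n) = of_nat i + of_nat (j - i)" using 1 by (simp flip: of_nat_add)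
        then have "(of_nat (j - i) :: 'n) = 0" using e by simp
        moreover have "j - i < m" using 1 j mN by auto
        ultimately show False using mmin[of "j - i"] 1 by auto
      next
        case 2
        have "(of_nat i :: 'n) = of_nat j + of_nat (i - j)" using 2 by (simp flip: of_nat_add)
        then have "(of_nat (i - j) :: 'n) = 0" using e by simp
        moreover have "i - j < m" using 2 i mN by auto
        ultimately show False using mmin[of "i - j"] 2 by auto
      qed
    qed
  qed
  show ?thesis using m(2) mN inj sub unfolding N_def by auto
qed

definition cidx :: "'n::{finite,comm_ring_1} \<Rightarrow> nat" where
  "cidx i = inv_into {..<CARD('n)} of_nat i"


lemma cidx_props:
  assumes surj: "surj (of_int :: int \<Rightarrow> 'n::{finite,comm_ring_1})"
  shows "cidx (i::'n) < CARD('n)" and "of_nat (cidx i) = i"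
    and "\<And>j. j < CARD('n) \<Longrightarrow> cidx (of_nat j :: 'n) = j"
    and "(of_nat CARD('n) :: 'n) = 0"
proof -
  note cs = char_struct[OF surj]
  show "cidx i < CARD('n)" unfolding cidx_def
    using cs inv_into_into[of i "of_nat :: nat \<Rightarrow> 'n" "{..<CARD('n)}"] by auto
  show "of_nat (cidx i) = i" unfolding cidx_def
    using cs f_inv_into_f[of i "of_nat :: nat \<Rightarrow> 'n" "{..<CARD('n)}"] by auto
  show "\<And>j. j < CARD('n) \<Longrightarrow> cidx (of_nat j :: 'n) = j" unfolding cidx_def
    using cs by auto
  show "(of_nat CARD('n) :: 'n) = 0" using cs by auto
qed


definition wN :: "nat \<Rightarrow> complex" where "wN N = cis (- 2 * pi / real N)"

definition chi :: "nat \<Rightarrow> 'n::{finite,comm_ring_1} \<Rightarrow> complex" where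
  "chi k i = (wN CARD('n) ^ cidx i) ^ k"

definition dft :: "real^('n::{finite,comm_ring_1}) \<Rightarrow> nat \<Rightarrow> complex" where
  "dft u k = (\<Sum>i\<in>UNIV. complex_of_real (u $ i) * chi k i)"

lemma wN_pow_N: "N > 0 \<Longrightarrow> wN N ^ N = 1"
proof -
  assume N: "N > 0"
  have "wN N ^ N = cis (real N * (- 2 * pi / real N))" by (simp only: wN_def Complex.DeMoivre)
  also have "real N * (- 2 * pi / real N) = 2 * pi * (-1)" using N by simp
  also have "cis (2 * pi * (-1)) = 1" by (rule cis_multiple_2pi) simp
  finally show ?thesis .
qed

lemma wN_pow_mod: "N > 0 \<Longrightarrow> wN N ^ m = wN N ^ (m mod N)"
proof -
  assume N: "N > 0"
  have "wN N ^ m = wN N ^ (N * (m div N) + m mod N)" by simp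
  also have "\<dots> = (wN N ^ N) ^ (m div N) * wN N ^ (m mod N)" by (simp only: power_add power_mult)
  finally show ?thesis using wN_pow_N[OF N] by simp
qed

lemma of_nat_mod_card:
  assumes S: "surj (of_int :: int \<Rightarrow> 'n::{finite,comm_ring_1})"
  shows "(of_nat (s mod CARD('n)) :: 'n) = of_nat s"
proof -
  have "(of_nat s :: 'n) = of_nat (s div CARD('n) * CARD('n) + s mod CARD('n))" by simp
  also have "\<dots> = of_nat (s div CARD('n)) * of_nat CARD('n) + of_nat (s mod CARD('n))"
    by (simp only: of_nat_add of_nat_mult)
  also have "(of_nat CARD('n) :: 'n) = 0" by (rule cidx_props(4)[OF S])
  finally show ?thesis by simp
qed

lemma cidx_add:
  assumes S: "surj (of_int :: int \<Rightarrow> 'n::{finite,comm_ring_1})"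
  shows "cidx (i + j :: 'n) = (cidx i + cidx j) mod CARD('n)"
proof -
  have "i + j = of_nat (cidx i) + of_nat (cidx j)" by (simp add: cidx_props(2)[OF S])
  also have "\<dots> = (of_nat ((cidx i + cidx j) mod CARD('n)) :: 'n)"
    by (simp add: of_nat_mod_card[OF S])
  finally show ?thesis using cidx_props(3)[OF S] by simp
qed

lemma chi_add:
  assumes S: "surj (of_int :: int \<Rightarrow> 'n::{finite,comm_ring_1})"
  shows "chi k (i + j :: 'n) = chi k i * chi k j"
proof -
  have "wN CARD('n) ^ cidx (i + j) = wN CARD('n) ^ (cidx i + cidx j)"
    by (simp add: cidx_add[OF S] wN_pow_mod[symmetric])
  then show ?thesis unfolding chi_def by (simp add: power_add power_mult_distrib)
qed

lemma cidx_zero: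
  assumes S: "surj (of_int :: int \<Rightarrow> 'n::{finite,comm_ring_1})"
  shows "cidx (0::'n) = 0"
  using cidx_props(3)[OF S, of 0] by simp

lemma chi_of_nat:
  fixes dummy :: "'n::{finite,comm_ring_1}"
  assumes S: "surj (of_int :: int \<Rightarrow> 'n)" and j: "j < CARD('n)"
  shows "chi k (of_nat j :: 'n) = cis (- 2 * pi * real j * real k / real CARD('n))"
proof -
  have "chi k (of_nat j :: 'n) = wN CARD('n) ^ (j * k)"
    unfolding chi_def using cidx_props(3)[OF S j] by (simp add: power_mult)
  also have "\<dots> = cis (real (j * k) * (- 2 * pi / real CARD('n)))" by (simp add: wN_def Complex.DeMoivre)
  also have "real (j * k) * (- 2 * pi / real CARD('n)) = - 2 * pi * real j * real k / real CARD('n)"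
    by simp
  finally show ?thesis .
qed

lemma cdft_eq_dft:
  fixes a :: "real^'n::{finite,comm_ring_1}"
  assumes S: "surj (of_int :: int \<Rightarrow> 'n)"
  shows "cdft a k = dft a k"
proof -
  have bij: "bij_betw (of_nat :: nat \<Rightarrow> 'n) {..<CARD('n)} UNIV"
    using char_struct[OF S] by (simp add: bij_betw_def)
  have "dft a k = (\<Sum>j<CARD('n). complex_of_real (a $ of_nat j) * chi k (of_nat j :: 'n))"
    unfolding dft_def by (rule sum.reindex_bij_betw[OF bij, symmetric])
  also have "\<dots> = cdft a k"
    unfolding cdft_def by (rule sum.cong[OF refl]) (simp add: chi_of_nat[OF S])
  finally show ?thesis ..
qed

lemma dft_conv:
  fixes a z :: "real^'n::{finite,comm_ring_1}"
  assumes S: "surj (of_int :: int \<Rightarrow> 'n)"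
  shows "dft (cconv a z) k = dft a k * dft z k"
proof -
  have "dft (cconv a z) k = (\<Sum>i\<in>UNIV. \<Sum>p\<in>UNIV. of_real (a $ p) * of_real (z $ (i - p)) * chi k i)"
    unfolding dft_def cconv_nth by (simp add: sum_distrib_right)
  also have "\<dots> = (\<Sum>p\<in>UNIV. \<Sum>i\<in>UNIV. of_real (a $ p) * of_real (z $ (i - p)) * chi k i)"
    by (rule sum.swap)
  also have "\<dots> = (\<Sum>p\<in>UNIV. of_real (a $ p) * chi k p * dft z k)"
  proof (rule sum.cong[OF refl])
    fix p
    have "(\<Sum>i\<in>UNIV. of_real (a $ p) * of_real (z $ (i - p)) * chi k i)
        = (\<Sum>j\<in>UNIV. of_real (a $ p) * of_real (z $ j) * chi k (j + p))"
      by (rule sum.reindex_bij_witness[of _ "\<lambda>j. j + p" "\<lambda>i. i - p"]) auto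
    also have "\<dots> = (\<Sum>j\<in>UNIV. of_real (a $ p) * chi k p * (of_real (z $ j) * chi k j))"
      by (simp add: chi_add[OF S] algebra_simps)
    also have "\<dots> = of_real (a $ p) * chi k p * dft z k"
      unfolding dft_def by (simp add: sum_distrib_left)
    finally show "(\<Sum>i\<in>UNIV. of_real (a $ p) * of_real (z $ (i - p)) * chi k i) = of_real (a $ p) * chi k p * dft z k" .
  qed
  also have "\<dots> = dft a k * dft z k"
    unfolding dft_def[of a] by (simp add: sum_distrib_right)
  finally show ?thesis .
qed

lemma wN_pow_ne1:
  assumes m: "0 < m" "m < N"
  shows "wN N ^ m \<noteq> 1"
proof
  assume e: "wN N ^ m = 1"
  have "wN N ^ m = cis (real m * (- 2 * pi / real N))" by (simp add: wN_def Complex.DeMoivre)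
  then have "cos (real m * (- 2 * pi / real N)) = 1" using e by (metis Re_complex_of_real cis.sel(1) of_real_1)
  then obtain n :: int where n: "real m * (- 2 * pi / real N) = real_of_int n * 2 * pi" using cos_one_2pi_int by blast
  have "pi * (- real m) = pi * (real_of_int n * real N)" using n m by (simp add: field_simps)
  then have "- real m = real_of_int n * real N" using mult_left_cancel[OF pi_neq_zero] by blast
  then have "- int m = n * int N" by (metis of_int_eq_iff of_int_minus of_int_mult of_int_of_nat_eq)
  then have "int N dvd int m" by (metis dvd_minus_iff dvd_triv_right mult.commute)
  then have "N dvd m" by simp
  then show False using m by (simp add: nat_dvd_not_less)
qed

lemma chi_sum:
  assumes S: "surj (of_int :: int \<Rightarrow> 'n::{finite,comm_ring_1})"
  shows "(\<Sum>k<CARD('n). chi k (j::'n)) = (if j = 0 then of_nat CARD('n) else 0)"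
proof (cases "j = 0")
  case True then show ?thesis by (simp add: chi_def cidx_zero[OF S])
next
  case False
  define \<zeta> where "\<zeta> = wN CARD('n) ^ cidx j"
  have "cidx j \<noteq> 0" using False cidx_props(2)[OF S, of j] by (metis of_nat_0)
  then have z1: "\<zeta> \<noteq> 1" unfolding \<zeta>_def using cidx_props(1)[OF S, of j] by (intro wN_pow_ne1) auto
  have zN: "\<zeta> ^ CARD('n) = 1" unfolding \<zeta>_def
    by (simp add: power_mult[symmetric] mult.commute[of "cidx j"]) (simp add: power_mult wN_pow_N)
  have "(\<Sum>k<CARD('n). chi k j) = (\<Sum>k<CARD('n). \<zeta> ^ k)" by (simp add: chi_def \<zeta>_def)
  also have "\<dots> = 0" using z1 zN by (simp add: geometric_sum)
  finally show ?thesis using False by simp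
qed

lemma dft_inv:
  assumes S: "surj (of_int :: int \<Rightarrow> 'n::{finite,comm_ring_1})"
  shows "(\<Sum>k<CARD('n). dft z k * chi k (- i0)) = of_nat CARD('n) * of_real (z $ (i0::'n))"
proof -
  have "(\<Sum>k<CARD('n). dft z k * chi k (- i0)) = (\<Sum>k<CARD('n). \<Sum>i\<in>UNIV. of_real (z $ i) * chi k (i - i0))"
    unfolding dft_def by (simp add: sum_distrib_right chi_add[OF S, symmetric] mult.assoc)
  also have "\<dots> = (\<Sum>i\<in>UNIV. \<Sum>k<CARD('n). of_real (z $ i) * chi k (i - i0))" by (rule sum.swap)
  also have "\<dots> = (\<Sum>i\<in>UNIV. of_real (z $ i) * (if i - i0 = 0 then of_nat CARD('n) else 0))"
    by (simp add: sum_distrib_left[symmetric] chi_sum[OF S])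
  also have "\<dots> = (\<Sum>i\<in>UNIV. if i = i0 then of_real (z $ i0) * of_nat CARD('n) else 0)"
    by (rule sum.cong[OF refl]) auto
  also have "\<dots> = of_nat CARD('n) * of_real (z $ i0)" by simp
  finally show ?thesis .
qed

lemma cconv_inj0:
  fixes a :: "real^'n::{finite,comm_ring_1}"
  assumes S: "surj (of_int :: int \<Rightarrow> 'n)"
    and nz: "\<forall>k<CARD('n). cdft a k \<noteq> 0"
    and z: "cconv a z = 0"
  shows "z = 0"
proof -
  have dz: "dft z k = 0" if k: "k < CARD('n)" for k
  proof -
    have "dft a k * dft z k = dft (cconv a z) k" by (simp add: dft_conv[OF S])
    also have "\<dots> = 0" by (simp add: z dft_def)
    finally show ?thesis using nz k cdft_eq_dft[OF S, of a k] mult_eq_0_iff by metis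
  qed
  show ?thesis
  proof (rule vec_eq_iff[THEN iffD2], rule allI)
    fix i0
    have "of_nat CARD('n) * complex_of_real (z $ i0) = 0"
      using dft_inv[OF S, of z i0] dz by simp
    then show "z $ i0 = 0 $ i0" by simp
  qed
qed

lemma cconv_inj:
  fixes a :: "real^'n::{finite,comm_ring_1}"
  assumes S: "surj (of_int :: int \<Rightarrow> 'n)"
    and nz: "\<forall>k<CARD('n). cdft a k \<noteq> 0"
  shows "inj (cconv a)"
proof (rule injI)
  fix z1 z2 assume "cconv a z1 = cconv a z2"
  then have "cconv a (z1 - z2) = 0" by (simp add: cconv_diff_right)
  then have "z1 - z2 = 0" by (rule cconv_inj0[OF S nz])
  then show "z1 = z2" by simp
qed


lemma carma_sol_eq:
  assumes "inj (cconv a)" "cconv a z = cconv w x"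
  shows "carma_sol a w x = z"
  unfolding carma_sol_def
proof (rule the_equality)
  show "cconv a z = cconv w x" by (rule assms(2))
  fix z' assume "cconv a z' = cconv w x"
  then show "z' = z" using assms injD by metis
qed

lemma rev_identity:
  assumes ab: "cconv a b = cd"
  shows "cconv (crev a) (cconv (crev (cconv b v)) gy) = cconv (crev v) gy"
proof -
  have "cconv a (cconv b v) = v" by (simp add: cconv_assoc ab cconv_cd_left)
  then show ?thesis by (metis cconv_assoc crev_cconv)
qed

lemma deriv_lin_comp:
  fixes c :: "real^'n::{finite,comm_ring_1}"
  assumes L: "(L has_derivative (\<lambda>h. gy \<bullet> h)) (at (cconv c x))"
  shows "((\<lambda>x'. L (cconv c x')) has_derivative (\<lambda>h. cconv (crev c) gy \<bullet> h)) (at x)"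
proof -
  have "((L \<circ> cconv c) has_derivative ((\<lambda>h. gy \<bullet> h) \<circ> cconv c)) (at x)"
    by (rule diff_chain_at[OF linear_imp_has_derivative[OF cconv_linear] L])
  moreover have "(\<lambda>h. gy \<bullet> h) \<circ> cconv c = (\<lambda>h. cconv (crev c) gy \<bullet> h)"
    by (simp add: o_def cconv_adjoint)
  ultimately show ?thesis by (simp add: o_def)
qed

lemma a_derivative:
  fixes a b w x y :: "real^'n::{finite,comm_ring_1}"
  assumes S: "surj (of_int :: int \<Rightarrow> 'n)"
    and ab: "cconv a b = cd" and ay: "cconv a y = cconv w x"
  shows "((\<lambda>a'. carma_sol a' w x) has_derivative (\<lambda>h. - cconv (cconv b y) h)) (at a)"
proof -
  obtain B where B0: "B > 0" and B: "\<And>u v. norm (cconv u v :: real^'n::{finite,comm_ring_1}) \<le> B * norm u * norm v"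
    using cconv_bound by blast
  have ba: "cconv b a = cd" using ab cconv_comm by metis
  define \<kappa> where "\<kappa> = B * norm b * B"
  have k0: "\<kappa> \<ge> 0" unfolding \<kappa>_def using B0 by simp
  have bhz: "norm (cconv b (cconv h z)) \<le> \<kappa> * norm h * norm z" for h z :: "real^'n::{finite,comm_ring_1}"
  proof -
    have "norm (cconv b (cconv h z)) \<le> B * norm b * norm (cconv h z)" by (rule B)
    also have "\<dots> \<le> B * norm b * (B * norm h * norm z)" by (rule mult_left_mono[OF B]) (use B0 in simp)
    finally show ?thesis by (simp add: \<kappa>_def algebra_simps)
  qed
  have key: "z = - cconv b (cconv h z) + cconv b u" if "cconv (a + h) z = u" for h z u
  proof -
    have "cconv a z = u - cconv h z" using that by (simp add: cconv_add_left algebra_simps)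
    then have "cconv b (cconv a z) = cconv b u - cconv b (cconv h z)" by (simp add: cconv_diff_right)
    moreover have "cconv b (cconv a z) = z" by (simp add: cconv_assoc ba cconv_cd_left)
    ultimately show ?thesis by simp
  qed
  have injh: "inj (cconv (a + h))" if h: "\<kappa> * norm h \<le> 1/2" for h
  proof -
    have "z = 0" if z: "cconv (a + h) z = 0" for z
    proof -
      have "z = - cconv b (cconv h z)" using key[OF z] by (simp add: cconv_zero_right)
      then have "norm z \<le> \<kappa> * norm h * norm z" using bhz[of h z] by (metis norm_minus_cancel)
      also have "\<dots> \<le> 1/2 * norm z" by (rule mult_right_mono[OF h]) simp
      finally show "z = 0" by simp
    qed
    then show ?thesis
      by (intro injI) (metis cconv_diff_right right_minus_eq)
  qed
  have inj0: "inj (cconv a)" using injh[of 0] by simp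
  have Ya: "carma_sol a w x = y" by (rule carma_sol_eq[OF inj0 ay])
  have Yh: "cconv (a + h) (carma_sol (a + h) w x) = cconv a y" if h: "\<kappa> * norm h \<le> 1/2" for h
  proof -
    have "surj (cconv (a + h))"
      by (rule linear_injective_imp_surjective[OF cconv_linear injh[OF h]]) simp
    then obtain z where z: "cconv (a + h) z = cconv w x" by (metis surjD)
    then show ?thesis using carma_sol_eq[OF injh[OF h] z] ay by simp
  qed
  have est: "norm (carma_sol (a + h) w x - y - (- cconv (cconv b y) h)) \<le> 2 * \<kappa>^2 * norm y * norm h * norm h"
    if h: "\<kappa> * norm h \<le> 1/2" for h
  proof -
    define Yv where "Yv = carma_sol (a + h) w x"
    define d where "d = Yv - y"
    have "Yv = - cconv b (cconv h Yv) + cconv b (cconv a y)"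
      unfolding Yv_def by (rule key[OF Yh[OF h]])
    moreover have "cconv b (cconv a y) = y" by (simp add: cconv_assoc ba cconv_cd_left)
    ultimately have "Yv = - cconv b (cconv h Yv) + y" by simp
    then have "Yv - y = - cconv b (cconv h Yv)" by (metis add_diff_cancel_right')
    then have "d = - cconv b (cconv h Yv)" by (simp only: d_def)
    moreover have "y + d = Yv" by (simp add: d_def)
    ultimately have "d = - cconv b (cconv h (y + d))" by simp
    then have dd: "d = - cconv b (cconv h y) - cconv b (cconv h d)"
      by (simp add: cconv_add_right)
    have "norm d \<le> norm (cconv b (cconv h y)) + norm (cconv b (cconv h d))"
      by (subst dd) (metis norm_minus_cancel norm_triangle_ineq4 diff_conv_add_uminus)
    also have "\<dots> \<le> \<kappa> * norm h * norm y + \<kappa> * norm h * norm d" using bhz[of h y] bhz[of h d] by simp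
    also have "\<kappa> * norm h * norm d \<le> 1/2 * norm d" by (rule mult_right_mono[OF h]) simp
    finally have nd: "norm d \<le> 2 * (\<kappa> * norm h * norm y)" by simp
    have e2: "cconv (cconv b y) h = cconv b (cconv h y)" by (metis cconv_assoc cconv_comm)
    have e3: "d + cconv b (cconv h y) = - cconv b (cconv h d)"
      using arg_cong[OF dd, of "\<lambda>t. t + cconv b (cconv h y)"] by (simp add: algebra_simps)
    have "carma_sol (a + h) w x - y - (- cconv (cconv b y) h) = d + cconv b (cconv h y)"
      by (simp add: d_def Yv_def e2)
    then have "carma_sol (a + h) w x - y - (- cconv (cconv b y) h) = - cconv b (cconv h d)"
      using e3 by simp
    then have "norm (carma_sol (a + h) w x - y - (- cconv (cconv b y) h)) = norm (cconv b (cconv h d))"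
      by simp
    also have "\<dots> \<le> \<kappa> * norm h * norm d" by (rule bhz)
    also have "\<dots> \<le> \<kappa> * norm h * (2 * (\<kappa> * norm h * norm y))"
      by (rule mult_left_mono[OF nd]) (use k0 in simp)
    finally show ?thesis by (simp add: power2_eq_square algebra_simps)
  qed
  show ?thesis
    unfolding has_derivative_at_alt
  proof (intro conjI allI impI)
    show "bounded_linear (\<lambda>h. - cconv (cconv b y) h)"
      by (rule linear_conv_bounded_linear[THEN iffD1]) (intro linear_compose_neg cconv_linear)
  next
    fix e :: real assume e: "e > 0"
    define C where "C = 2 * \<kappa>^2 * norm y"
    have C0: "C \<ge> 0" unfolding C_def by simp
    define r where "r = min (1 / (2 * \<kappa> + 1)) (e / (C + 1))"
    have "e / (C + 1) > 0" using e C0 by simp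
    then have r0: "r > 0" unfolding r_def using k0 by simp
    show "\<exists>d>0. \<forall>a'. norm (a' - a) < d \<longrightarrow>
            norm (carma_sol a' w x - carma_sol a w x - (- cconv (cconv b y) (a' - a))) \<le> e * norm (a' - a)"
    proof (intro exI[of _ r] conjI allI impI r0)
      fix a' assume a': "norm (a' - a) < r"
      define h where "h = a' - a"
      have h1: "norm h < 1 / (2 * \<kappa> + 1)" and h2: "norm h < e / (C + 1)"
        using a' unfolding r_def h_def by auto
      have "norm h * (2 * \<kappa> + 1) < 1" using h1 k0 by (simp add: field_simps)
      moreover have "norm h * (2 * \<kappa> + 1) = 2 * (\<kappa> * norm h) + norm h" by (simp add: algebra_simps)
      ultimately have hk: "\<kappa> * norm h \<le> 1/2" using norm_ge_zero[of h] by linarith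
      have "norm h * (C + 1) < e" using h2 C0 by (simp add: field_simps)
      moreover have "norm h * (C + 1) = C * norm h + norm h" by (simp add: algebra_simps)
      ultimately have hC: "C * norm h \<le> e" using norm_ge_zero[of h] by linarith
      have a'h: "a' = a + h" unfolding h_def by simp
      have "norm (carma_sol a' w x - carma_sol a w x - (- cconv (cconv b y) (a' - a)))
          = norm (carma_sol (a + h) w x - y - (- cconv (cconv b y) h))"
        by (simp add: a'h Ya)
      also have "\<dots> \<le> C * norm h * norm h" using est[OF hk] by (simp add: C_def)
      also have "\<dots> \<le> e * norm h" by (rule mult_right_mono[OF hC]) simp
      finally show "norm (carma_sol a' w x - carma_sol a w x - (- cconv (cconv b y) (a' - a))) \<le> e * norm (a' - a)"
        by (simp add: h_def)
    qed
  qed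
qed


lemma part2:
  "\<forall>(a::real^('n::{finite,comm_ring_1})) w x y (L :: real^('n::{finite,comm_ring_1}) \<Rightarrow> real) gy.
            surj (of_int :: int \<Rightarrow> ('n::{finite,comm_ring_1})) \<and>
            (\<forall>k<CARD('n::{finite,comm_ring_1}). cdft a k \<noteq> 0) \<and>
            cconv a y = cconv w x \<and>
            (L has_derivative (\<lambda>h. gy \<bullet> h)) (at y) \<longrightarrow>
            (\<exists>gx gw ga.
               ((\<lambda>x'. L (carma_sol a w x')) has_derivative (\<lambda>h. gx \<bullet> h)) (at x) \<and>
               ((\<lambda>w'. L (carma_sol a w' x)) has_derivative (\<lambda>h. gw \<bullet> h)) (at w) \<and>
               ((\<lambda>a'. L (carma_sol a' w x)) has_derivative (\<lambda>h. ga \<bullet> h)) (at a) \<and>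
               cconv (crev a) gx = cconv (crev w) gy \<and>
               - cconv (crev a) ga = cconv (crev y) gy \<and>
               cconv (crev a) gw = cconv (crev x) gy)"
proof (intro allI impI)
  fix a w x y :: "real^('n::{finite,comm_ring_1})" and L and gy
  assume H: "surj (of_int :: int \<Rightarrow> 'n) \<and> (\<forall>k<CARD('n). cdft a k \<noteq> 0) \<and>
            cconv a y = cconv w x \<and> (L has_derivative (\<lambda>h. gy \<bullet> h)) (at y)"
  then have S: "surj (of_int :: int \<Rightarrow> 'n)" and nz: "\<forall>k<CARD('n). cdft a k \<noteq> 0"
    and ay: "cconv a y = cconv w x" and L: "(L has_derivative (\<lambda>h. gy \<bullet> h)) (at y)"
    by auto
  have inj: "inj (cconv a)" by (rule cconv_inj[OF S nz])
  have "surj (cconv a)" by (rule linear_injective_imp_surjective[OF cconv_linear inj]) simp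
  then obtain b where ab: "cconv a b = cd" by (metis surjD)
  have ba: "cconv b a = cd" using ab cconv_comm by metis
  have sol: "carma_sol a w' x' = cconv b (cconv w' x')" for w' x'
    by (rule carma_sol_eq[OF inj]) (simp add: cconv_assoc ab cconv_cd_left)
  have yb: "cconv b (cconv w x) = y"
    using sol[of w x] carma_sol_eq[OF inj ay] by simp
  define gx where "gx = cconv (crev (cconv b w)) gy"
  define gw where "gw = cconv (crev (cconv b x)) gy"
  define ga where "ga = - cconv (crev (cconv b y)) gy"
  have dx: "((\<lambda>x'. L (carma_sol a w x')) has_derivative (\<lambda>h. gx \<bullet> h)) (at x)"
  proof -
    have e: "carma_sol a w x' = cconv (cconv b w) x'" for x' by (simp add: sol cconv_assoc)
    have "(L has_derivative (\<lambda>h. gy \<bullet> h)) (at (cconv (cconv b w) x))"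
      using L yb by (simp add: cconv_assoc)
    then show ?thesis unfolding e gx_def by (rule deriv_lin_comp)
  qed
  have dw: "((\<lambda>w'. L (carma_sol a w' x)) has_derivative (\<lambda>h. gw \<bullet> h)) (at w)"
  proof -
    have e: "carma_sol a w' x = cconv (cconv b x) w'" for w'
      by (simp add: sol cconv_assoc cconv_comm[of w' x])
    have "(L has_derivative (\<lambda>h. gy \<bullet> h)) (at (cconv (cconv b x) w))"
    proof -
      have "cconv (cconv b x) w = y" using yb by (metis cconv_assoc cconv_comm)
      then show ?thesis using L by simp
    qed
    then show ?thesis unfolding e gw_def by (rule deriv_lin_comp)
  qed
  have da: "((\<lambda>a'. L (carma_sol a' w x)) has_derivative (\<lambda>h. ga \<bullet> h)) (at a)"
  proof -
    have Y: "((\<lambda>a'. carma_sol a' w x) has_derivative (\<lambda>h. - cconv (cconv b y) h)) (at a)"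
      by (rule a_derivative[OF S ab ay])
    have Ya: "carma_sol a w x = y" by (rule carma_sol_eq[OF inj ay])
    have "((L \<circ> (\<lambda>a'. carma_sol a' w x)) has_derivative ((\<lambda>h. gy \<bullet> h) \<circ> (\<lambda>h. - cconv (cconv b y) h))) (at a)"
      by (rule diff_chain_at[OF Y]) (simp add: Ya L)
    moreover have "(\<lambda>h. gy \<bullet> h) \<circ> (\<lambda>h. - cconv (cconv b y) h) = (\<lambda>h. ga \<bullet> h)"
      by (simp add: o_def ga_def cconv_adjoint)
    ultimately show ?thesis by (simp add: o_def)
  qed
  have i1: "cconv (crev a) gx = cconv (crev w) gy" unfolding gx_def by (rule rev_identity[OF ab])
  have i2: "- cconv (crev a) ga = cconv (crev y) gy"
    unfolding ga_def by (simp add: cconv_minus_right rev_identity[OF ab])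
  have i3: "cconv (crev a) gw = cconv (crev x) gy" unfolding gw_def by (rule rev_identity[OF ab])
  show "\<exists>gx gw ga.
               ((\<lambda>x'. L (carma_sol a w x')) has_derivative (\<lambda>h. gx \<bullet> h)) (at x) \<and>
               ((\<lambda>w'. L (carma_sol a w' x)) has_derivative (\<lambda>h. gw \<bullet> h)) (at w) \<and>
               ((\<lambda>a'. L (carma_sol a' w x)) has_derivative (\<lambda>h. ga \<bullet> h)) (at a) \<and>
               cconv (crev a) gx = cconv (crev w) gy \<and>
               - cconv (crev a) ga = cconv (crev y) gy \<and>
               cconv (crev a) gw = cconv (crev x) gy"
    using dx dw da i1 i2 i3 by blast
qed


theorem theorem6:
  shows "(\<forall>(a::int \<Rightarrow> real) ainv w x y gy.
            a summable_on UNIV \<and> ainv summable_on UNIV \<and> w summable_on UNIV \<and>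
            x summable_on UNIV \<and> y summable_on UNIV \<and> bounded (range gy) \<and>
            zconv a ainv = zdelta \<and> zconv ainv a = zdelta \<and>
            zconv a y = zconv w x \<longrightarrow>
            (let gx = zchain_grad (\<lambda>x'. zarma_sol a w x') x gy;
                 gw = zchain_grad (\<lambda>w'. zarma_sol a w' x) w gy;
                 ga = zchain_grad (\<lambda>a'. zarma_sol a' w x) a gy
             in zconv (rev_seq a) gx = zconv (rev_seq w) gy \<and>
                (\<lambda>i. - zconv (rev_seq a) ga i) = zconv (rev_seq y) gy \<and>
                zconv (rev_seq a) gw = zconv (rev_seq x) gy))
       \<and>
         (\<forall>(a::real^('n::{finite,comm_ring_1})) w x y (L :: real^('n::{finite,comm_ring_1}) \<Rightarrow> real) gy.
            surj (of_int :: int \<Rightarrow> ('n::{finite,comm_ring_1})) \<and>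
            (\<forall>k<CARD('n::{finite,comm_ring_1}). cdft a k \<noteq> 0) \<and>
            cconv a y = cconv w x \<and>
            (L has_derivative (\<lambda>h. gy \<bullet> h)) (at y) \<longrightarrow>
            (\<exists>gx gw ga.
               ((\<lambda>x'. L (carma_sol a w x')) has_derivative (\<lambda>h. gx \<bullet> h)) (at x) \<and>
               ((\<lambda>w'. L (carma_sol a w' x)) has_derivative (\<lambda>h. gw \<bullet> h)) (at w) \<and>
               ((\<lambda>a'. L (carma_sol a' w x)) has_derivative (\<lambda>h. ga \<bullet> h)) (at a) \<and>
               cconv (crev a) gx = cconv (crev w) gy \<and>
               - cconv (crev a) ga = cconv (crev y) gy \<and>
               cconv (crev a) gw = cconv (crev x) gy))"
  using part1 part2 by (rule conjI)

end
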